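(* Let $F$ satisfy the standing assumptions below, $\lambda>0$, $\varepsilon>0$ with $\varepsilon\le\frac72(G+\sigma)$, and $T\ge49(G+\sigma)^2\varepsilon^{-2}$. Run the general conversion scheme below with the choice $\mathbf{x}_t=\mathbf{x}_0$ for all $t\in[T]$, with an online learner satisfying, for all $t\in[T]$ and all comparators $\mathbf{u}$ (deterministic or depending on the run), $\mathbb{E}[\mathrm{Regret}^\beta_t(\mathbf{u})]\le\frac{2\|\mathbf{u}\|(G+\sigma)}{\beta\sqrt{1-\beta}}+\frac\mu2\|\mathbf{u}\|^2$, and with $\beta=1-\left(\frac{\varepsilon}{7(G+\sigma)}\right)^2$ and $\mu=2\lambda^{1/2}\varepsilon^{1/2}$. Then $$\mathbb{E}_\tau\|\nabla F(\overline{\mathbf{y}}_\tau)\|_\lambda\le3\varepsilon+\frac{4\lambda^{1/2}\varepsilon^{-1/2}}{T}\,\mathbb{E}\sum_{t=1}^T\big(F(\mathbf{x}_0)-F(\mathbf{w}_t)\big).$$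
   Context: Norms are Euclidean. Standing assumptions: $F:\mathbb{R}^d\to\mathbb{R}$ differentiable; for all $\mathbf{x},\mathbf{w}$, $F(\mathbf{x})-F(\mathbf{w})=\int_0^1\langle\nabla F(\mathbf{w}+t(\mathbf{x}-\mathbf{w})),\mathbf{x}-\mathbf{w}\rangle\,dt$; $\|\nabla F\|\le G$ everywhere. The stochastic gradient oracle at $\mathbf{x}$ independently returns $\mathbf{g}$ with $\mathbb{E}\mathbf{g}=\nabla F(\mathbf{x})$, $\mathbb{E}\|\mathbf{g}-\nabla F(\mathbf{x})\|^2\le\sigma^2$. $\|\nabla F(\mathbf{x})\|_\lambda := \inf\{\|\mathbb{E}_{\mathbf{w}\sim p}\nabla F(\mathbf{w})\|+\lambda\mathbb{E}_{\mathbf{w}\sim p}\|\mathbf{w}-\mathbf{x}\|^2\}$ over probability distributions $p$ on $\mathbb{R}^d$ with mean $\mathbf{x}$. General conversion scheme: input $\mathbf{x}_0=\mathbf{w}_0$, $T$, $\mu\ge0$, online learner $\mathcal{A}$ (output $\Delta_t$ at round $t$ based on $\ell_1,\dots,\ell_{t-1}$). For $t=1,\dots,T$: receive $\Delta_t$; choose $\mathbf{x}_t$; $\mathbf{w}_t=\mathbf{x}_t+\Delta_t$; $\mathbf{y}_t=\mathbf{x}_t+s_t\Delta_t$, $s_t\sim\mathrm{Unif}[0,1]$ i.i.d.; $\mathbf{g}_t$ = oracle output at $\mathbf{y}_t$; send $\ell_t(\mathbf{v})=\langle\mathbf{g}_t,\mathbf{v}\rangle+\frac\mu2\|\mathbf{v}\|^2$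 to $\mathcal{A}$. $\mathrm{Regret}^\beta_t(\mathbf{u}) := \sum_{s=1}^t\beta^{t-s}(\ell_s(\Delta_s)-\ell_s(\mathbf{u}))$. $\overline{\mathbf{y}}_t := \frac{1-\beta}{1-\beta^t}\sum_{s=1}^t\beta^{t-s}\mathbf{y}_s$. $\tau$ is independent of the algorithm with $\Pr(\tau=t)=\frac{1-\beta^t}{T}$ ($t\le T-1$), $\Pr(\tau=T)=\frac{1-\beta^T}{(1-\beta)T}$; $\mathbb{E}_\tau$ is expectation over $\tau$ and all algorithmic randomness. (With $\mathbf{x}_t\equiv\mathbf{x}_0$ the iterate stability factor is $0$, so the parameters are those of the general guarantee with stability factor $0$: comparator norm $\frac14\lambda^{-1/2}\varepsilon^{1/2}$.) *)

theory Defs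
  imports "HOL-Probability.Probability"
begin

definition lambda_norm :: "('a::euclidean_space \<Rightarrow> 'a) \<Rightarrow> real \<Rightarrow> 'a \<Rightarrow> real" where
  "lambda_norm gradF lam x =
     Inf {norm (\<integral>w. gradF w \<partial>p) + lam * (\<integral>w. (norm (w - x))^2 \<partial>p) | p.
            prob_space p \<and> sets p = sets borel \<and>
            integrable p (\<lambda>w. w) \<and> (\<integral>w. w \<partial>p) = x \<and>
            integrable p (\<lambda>w. (norm (w - x))^2) \<and> integrable p gradF}"

definition lin_quad_loss :: "real \<Rightarrow> 'a::real_inner \<Rightarrow> 'a \<Rightarrow> real" where
  "lin_quad_loss mu g v = g \<bullet> v + mu / 2 * (norm v)^2"

text \<open>Sample space of the run: learner randomness rho ~ R, and for each round
  t in [T] an independent pair (s_t, xi_t) with s_t ~ Unif[0,1] and oracle noise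
  xi_t ~ Xi.\<close>
definition conv_space :: "'r measure \<Rightarrow> 'e measure \<Rightarrow> nat \<Rightarrow> ('r \<times> (nat \<Rightarrow> real \<times> 'e)) measure" where
  "conv_space R Xi T =
     R \<Otimes>\<^sub>M (\<Pi>\<^sub>M t\<in>{1..T}. (uniform_measure lborel {0..(1::real)} \<Otimes>\<^sub>M Xi))"

text \<open>Stochastic gradients g_1..g_n of the run with x_t = x0 (as a list).
  The learner A receives the randomness rho and the list of past losses.\<close>
fun conv_grads :: "('r \<Rightarrow> ('a::euclidean_space \<Rightarrow> real) list \<Rightarrow> 'a) \<Rightarrow> ('a \<Rightarrow> 'e \<Rightarrow> 'a) \<Rightarrow> 'a \<Rightarrow> real
     \<Rightarrow> 'r \<times> (nat \<Rightarrow> real \<times> 'e) \<Rightarrow> nat \<Rightarrow> 'a list" where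
  "conv_grads A Orc x0 mu \<omega> 0 = []"
| "conv_grads A Orc x0 mu \<omega> (Suc n) =
     (let gs = conv_grads A Orc x0 mu \<omega> n;
          \<Delta> = A (fst \<omega>) (map (lin_quad_loss mu) gs);
          s = fst (snd \<omega> (Suc n));
          xi = snd (snd \<omega> (Suc n))
      in gs @ [Orc (x0 + s *\<^sub>R \<Delta>) xi])"

text \<open>Delta_t (t >= 1): learner output based on l_1..l_(t-1).\<close>
definition conv_Delta where
  "conv_Delta A Orc x0 mu \<omega> t = A (fst \<omega>) (map (lin_quad_loss mu) (conv_grads A Orc x0 mu \<omega> (t - 1)))"

definition conv_w where
  "conv_w A Orc x0 mu \<omega> t = x0 + conv_Delta A Orc x0 mu \<omega> t"

definition conv_y where
  "conv_y A Orc x0 mu \<omega> t = x0 + fst (snd \<omega> t) *\<^sub>R conv_Delta A Orc x0 mu \<omega> t"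

definition conv_g where
  "conv_g A Orc x0 mu \<omega> t = Orc (conv_y A Orc x0 mu \<omega> t) (snd (snd \<omega> t))"

definition regret_beta :: "real \<Rightarrow> (nat \<Rightarrow> 'a \<Rightarrow> real) \<Rightarrow> (nat \<Rightarrow> 'a) \<Rightarrow> nat \<Rightarrow> 'a \<Rightarrow> real" where
  "regret_beta \<beta> l \<Delta> t u = (\<Sum>s=1..t. \<beta>^(t-s) * (l s (\<Delta> s) - l s u))"

definition exp_avg :: "real \<Rightarrow> (nat \<Rightarrow> 'a::real_vector) \<Rightarrow> nat \<Rightarrow> 'a" where
  "exp_avg \<beta> y t = ((1 - \<beta>) / (1 - \<beta>^t)) *\<^sub>R (\<Sum>s=1..t. \<beta>^(t-s) *\<^sub>R y s)"

definition tau_prob :: "real \<Rightarrow> nat \<Rightarrow> nat \<Rightarrow> real" where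
  "tau_prob \<beta> T t = (if t < T then (1 - \<beta>^t) / real T else (1 - \<beta>^T) / ((1 - \<beta>) * real T))"

end

theory Submission
  imports Defs
begin

lemma gradF_measurable:
  fixes F :: "'a::euclidean_space \<Rightarrow> real" and gradF :: "'a \<Rightarrow> 'a"
  assumes grad: "\<And>x. (F has_derivative (\<lambda>h. gradF x \<bullet> h)) (at x)"
  shows "gradF \<in> borel_measurable borel"
proof -
  have contF: "continuous_on UNIV F"
    using grad has_derivative_continuous continuous_at_imp_continuous_on by blast
  have Fm: "F \<in> borel_measurable borel"
    using contF borel_measurable_continuous_onI by blast
  have comp: "(\<lambda>x. gradF x \<bullet> b) \<in> borel_measurable borel" for b
  proof (rule borel_measurable_LIMSEQ_real)
    fix n :: nat
    show "(\<lambda>x. (F (x + (1 / real (Suc n)) *\<^sub>R b) - F x) * real (Suc n)) \<in> borel_measurable borel"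
      using Fm by measurable
  next
    fix x :: 'a assume "x \<in> space borel"
    have d: "((\<lambda>t. F (x + t *\<^sub>R b)) has_real_derivative (gradF x \<bullet> b)) (at 0)"
    proof -
      have "((\<lambda>t. x + t *\<^sub>R b) has_derivative (\<lambda>t. t *\<^sub>R b)) (at 0)"
        by (auto intro!: derivative_eq_intros)
      moreover have "(F has_derivative (\<lambda>h. gradF x \<bullet> h)) (at (x + 0 *\<^sub>R b))"
        using grad[of x] by simp
      ultimately have "((\<lambda>t. F (x + t *\<^sub>R b)) has_derivative (\<lambda>t. gradF x \<bullet> (t *\<^sub>R b))) (at 0)"
        by (rule has_derivative_compose)
      then show ?thesis
        by (simp add: has_field_derivative_def mult.commute[of _ "gradF x \<bullet> b"])
    qed
    then have lim: "((\<lambda>h. (F (x + h *\<^sub>R b) - F x) / h) \<longlongrightarrow> gradF x \<bullet> b) (at 0)"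
      using d unfolding DERIV_def by simp
    have s: "filterlim (\<lambda>n. 1 / real (Suc n)) (at 0) sequentially"
    proof (rule tendsto_imp_filterlim_at_right[THEN filterlim_mono])
      show "(\<lambda>n. 1 / real (Suc n)) \<longlonglongrightarrow> 0"
        using LIMSEQ_inverse_real_of_nat by (simp add: inverse_eq_divide)
      show "\<forall>\<^sub>F n in sequentially. 0 < 1 / real (Suc n)" by simp
    qed (simp_all add: at_le)
    have "((\<lambda>n. (F (x + (1 / real (Suc n)) *\<^sub>R b) - F x) / (1 / real (Suc n))) \<longlongrightarrow> gradF x \<bullet> b) sequentially"
      using filterlim_compose[OF lim s] by (simp add: o_def)
    then show "(\<lambda>n. (F (x + (1 / real (Suc n)) *\<^sub>R b) - F x) * real (Suc n)) \<longlonglongrightarrow> gradF x \<bullet> b"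
      by simp
  qed
  show ?thesis
    using comp by (subst borel_measurable_euclidean_space) auto
qed

lemma F_lipschitz:
  fixes F :: "'a::euclidean_space \<Rightarrow> real" and gradF :: "'a \<Rightarrow> 'a"
  assumes ftc: "\<And>x w. ((\<lambda>t. gradF (w + t *\<^sub>R (x - w)) \<bullet> (x - w)) has_integral (F x - F w)) {0..1}"
    and grad_bound: "\<And>x. norm (gradF x) \<le> G"
  shows "\<bar>F x - F w\<bar> \<le> G * norm (x - w)"
proof -
  have G0: "0 \<le> G" using grad_bound[of 0] norm_ge_zero order_trans by blast
  have "norm (F x - F w) \<le> G * norm (x - w) * measure lborel {0..1::real}"
  proof (rule has_integral_bound_real[where S="{}"])
    show "0 \<le> G * norm (x - w)" using G0 by simp
    fix t :: real
    have "norm (gradF (w + t *\<^sub>R (x - w)) \<bullet> (x - w)) \<le> norm (gradF (w + t *\<^sub>R (x - w))) * norm (x - w)"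
      using Cauchy_Schwarz_ineq2 by simp
    also have "\<dots> \<le> G * norm (x - w)" using grad_bound by (simp add: mult_right_mono)
    finally show "norm (gradF (w + t *\<^sub>R (x - w)) \<bullet> (x - w)) \<le> G * norm (x - w)" .
  qed (use ftc in auto)
  then show ?thesis by simp
qed

definition U01 :: "real measure" where "U01 = uniform_measure lborel {0..1}"

lemma prob_U01: "prob_space U01"
  unfolding U01_def by (rule prob_space_uniform_measure) auto

lemma sets_U01[simp, measurable_cong]: "sets U01 = sets borel"
  unfolding U01_def by simp

lemma space_U01[simp]: "space U01 = UNIV"
  unfolding U01_def by simp

lemma AE_U01: "AE a in U01. 0 \<le> a \<and> a \<le> 1"
  unfolding U01_def by (rule AE_uniform_measureI) auto

lemma U01_density: "U01 = density lborel (\<lambda>x. ennreal (indicator {0..1} x))"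
  unfolding U01_def uniform_measure_def by (simp add: ennreal_indicator divide_ennreal_def)

lemma U01_integral:
  fixes h :: "real \<Rightarrow> real"
  assumes hm: "h \<in> borel_measurable borel" and hb: "\<And>a. \<bar>h a\<bar> \<le> B"
    and hi: "(h has_integral I) {0..1}"
  shows "integrable U01 h" "(\<integral>a. h a \<partial>U01) = I"
proof -
  interpret prob_space U01 by (rule prob_U01)
  show "integrable U01 h"
    by (rule integrable_const_bound[where B=B]) (use hb hm in auto)
  have "(\<integral>a. h a \<partial>U01) = (\<integral>a. indicator {0..1} a *\<^sub>R h a \<partial>lborel)"
    unfolding U01_density by (rule integral_density) (use hm in auto)
  also have "\<dots> = I"
  proof -
    have i1: "integrable lborel (\<lambda>a. indicator {0..1::real} a * B)"
      by (intro integrable_mult_left integrable_real_indicator) auto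
    have ib: "integrable lborel (\<lambda>a. indicator {0..1} a *\<^sub>R h a)"
      by (rule Bochner_Integration.integrable_bound[OF i1]) (use hm hb in \<open>auto simp: indicator_def intro: order_trans[OF _ abs_ge_self]\<close>)
    have e: "(\<lambda>a. indicator {0..1} a *\<^sub>R h a) = (\<lambda>a. if a \<in> {0..1::real} then h a else 0)"
      by (auto simp: indicator_def)
    have "((\<lambda>a. if a \<in> {0..1::real} then h a else 0) has_integral (\<integral>a. indicator {0..1} a *\<^sub>R h a \<partial>lborel)) UNIV"
      using has_integral_integral_lborel[OF ib] unfolding e .
    then have "(h has_integral (\<integral>a. indicator {0..1} a *\<^sub>R h a \<partial>lborel)) {0..1}"
      unfolding has_integral_restrict_UNIV .
    then show ?thesis using hi has_integral_unique by blast
  qed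
  finally show "(\<integral>a. h a \<partial>U01) = I" .
qed

lemma resample_integral:
  fixes h :: "'r \<times> ('i \<Rightarrow> 'm) \<Rightarrow> real"
  assumes R: "prob_space R" and M: "prob_space M" and I: "finite I" "t \<in> I"
    and hi: "integrable (R \<Otimes>\<^sub>M PiM I (\<lambda>_. M)) h"
  shows "(\<integral>\<omega>. h \<omega> \<partial>(R \<Otimes>\<^sub>M PiM I (\<lambda>_. M))) =
     (\<integral>\<rho>. (\<integral>x. (\<integral>z. h (\<rho>, x(t := z)) \<partial>M) \<partial>PiM (I - {t}) (\<lambda>_. M)) \<partial>R)"
proof -
  interpret R: prob_space R by fact
  interpret M: prob_space M by fact
  interpret P: product_sigma_finite "\<lambda>_. M" by standard
  interpret PI: prob_space "PiM I (\<lambda>_. M)" by (rule prob_space_PiM) (use M in auto)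
  interpret RP: pair_sigma_finite R "PiM I (\<lambda>_. M)" by standard
  have ins: "insert t (I - {t}) = I" using I by auto
  have "(\<integral>\<omega>. h \<omega> \<partial>(R \<Otimes>\<^sub>M PiM I (\<lambda>_. M))) = (\<integral>\<rho>. (\<integral>x. h (\<rho>, x) \<partial>PiM I (\<lambda>_. M)) \<partial>R)"
    using RP.integral_fst'[OF hi] by simp
  also have "\<dots> = (\<integral>\<rho>. (\<integral>x. (\<integral>z. h (\<rho>, x(t := z)) \<partial>M) \<partial>PiM (I - {t}) (\<lambda>_. M)) \<partial>R)"
  proof (rule integral_cong_AE)
    show "(\<lambda>\<rho>. \<integral>x. h (\<rho>, x) \<partial>PiM I (\<lambda>_. M)) \<in> borel_measurable R"
      using hi by measurable
    show "(\<lambda>\<rho>. \<integral>x. (\<integral>z. h (\<rho>, x(t := z)) \<partial>M) \<partial>PiM (I - {t}) (\<lambda>_. M)) \<in> borel_measurable R"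
    proof -
      have hm: "h \<in> borel_measurable (R \<Otimes>\<^sub>M PiM I (\<lambda>_. M))" using hi by auto
      have "(\<lambda>p. h (fst (fst p), (snd (fst p))(t := snd p))) \<in> borel_measurable ((R \<Otimes>\<^sub>M PiM (I - {t}) (\<lambda>_. M)) \<Otimes>\<^sub>M M)"
      proof -
        have "(\<lambda>p. (fst (fst p), (snd (fst p))(t := snd p))) \<in> measurable ((R \<Otimes>\<^sub>M PiM (I - {t}) (\<lambda>_. M)) \<Otimes>\<^sub>M M) (R \<Otimes>\<^sub>M PiM I (\<lambda>_. M))"
        proof -
          have "(\<lambda>(x, z). x(t := z)) \<in> measurable (PiM (I - {t}) (\<lambda>_. M) \<Otimes>\<^sub>M M) (PiM (insert t (I - {t})) (\<lambda>_. M))"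
            using measurable_add_dim[where I="I - {t}" and M="\<lambda>_. M" and i=t] by simp
          then have a: "(\<lambda>(x, z). x(t := z)) \<in> measurable (PiM (I - {t}) (\<lambda>_. M) \<Otimes>\<^sub>M M) (PiM I (\<lambda>_. M))"
            unfolding ins .
          have b: "(\<lambda>p. (snd (fst p), snd p)) \<in> measurable ((R \<Otimes>\<^sub>M PiM (I - {t}) (\<lambda>_. M)) \<Otimes>\<^sub>M M) (PiM (I - {t}) (\<lambda>_. M) \<Otimes>\<^sub>M M)"
            by measurable
          have "(\<lambda>p. (snd (fst p))(t := snd p)) \<in> measurable ((R \<Otimes>\<^sub>M PiM (I - {t}) (\<lambda>_. M)) \<Otimes>\<^sub>M M) (PiM I (\<lambda>_. M))"
            using measurable_comp[OF b a] by (simp add: o_def)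
          then show ?thesis by (intro measurable_Pair) auto
        qed
        from measurable_comp[OF this hm] show ?thesis by (simp add: o_def)
      qed
      then have "case_prod (\<lambda>p z. h (fst p, (snd p)(t := z))) \<in> borel_measurable ((R \<Otimes>\<^sub>M PiM (I - {t}) (\<lambda>_. M)) \<Otimes>\<^sub>M M)"
        by (simp add: case_prod_beta')
      from M.borel_measurable_lebesgue_integral[OF this]
      have "(\<lambda>p. \<integral>z. h (fst p, (snd p)(t := z)) \<partial>M) \<in> borel_measurable (R \<Otimes>\<^sub>M PiM (I - {t}) (\<lambda>_. M))" .
      then have cp: "case_prod (\<lambda>\<rho> x. \<integral>z. h (\<rho>, x(t := z)) \<partial>M) \<in> borel_measurable (R \<Otimes>\<^sub>M PiM (I - {t}) (\<lambda>_. M))"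
        by (simp add: case_prod_beta')
      interpret PI': prob_space "PiM (I - {t}) (\<lambda>_. M)" by (rule prob_space_PiM) (use M in auto)
      from PI'.borel_measurable_lebesgue_integral[OF cp] show ?thesis .
    qed
    show "AE \<rho> in R. (\<integral>x. h (\<rho>, x) \<partial>PiM I (\<lambda>_. M)) = (\<integral>x. (\<integral>z. h (\<rho>, x(t := z)) \<partial>M) \<partial>PiM (I - {t}) (\<lambda>_. M))"
      using RP.AE_integrable_fst'[OF hi]
    proof eventually_elim
      case (elim \<rho>)
      then have "integrable (PiM (insert t (I - {t})) (\<lambda>_. M)) (\<lambda>x. h (\<rho>, x))" unfolding ins .
      from P.product_integral_insert[OF _ _ this] I show ?case unfolding ins by simp
    qed
  qed
  finally show ?thesis .
qed

lemma resample_nn_bound: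
  fixes h :: "'r \<times> ('i \<Rightarrow> 'm) \<Rightarrow> ennreal"
  assumes R: "prob_space R" and M: "prob_space M" and I: "finite I" "t \<in> I"
    and hm: "h \<in> borel_measurable (R \<Otimes>\<^sub>M PiM I (\<lambda>_. M))"
    and bd: "\<And>\<rho> x. \<rho> \<in> space R \<Longrightarrow> x \<in> space (PiM (I - {t}) (\<lambda>_. M)) \<Longrightarrow>
               (\<integral>\<^sup>+z. h (\<rho>, x(t := z)) \<partial>M) \<le> C"
  shows "(\<integral>\<^sup>+\<omega>. h \<omega> \<partial>(R \<Otimes>\<^sub>M PiM I (\<lambda>_. M))) \<le> C"
proof -
  interpret R: prob_space R by fact
  interpret M: prob_space M by fact
  interpret P: product_sigma_finite "\<lambda>_. M" by standard
  interpret PI: prob_space "PiM I (\<lambda>_. M)" by (rule prob_space_PiM) (use M in auto)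
  interpret PI': prob_space "PiM (I - {t}) (\<lambda>_. M)" by (rule prob_space_PiM) (use M in auto)
  have ins: "insert t (I - {t}) = I" using I by auto
  have "(\<integral>\<^sup>+\<omega>. h \<omega> \<partial>(R \<Otimes>\<^sub>M PiM I (\<lambda>_. M))) = (\<integral>\<^sup>+\<rho>. (\<integral>\<^sup>+x. h (\<rho>, x) \<partial>PiM I (\<lambda>_. M)) \<partial>R)"
    using PI.nn_integral_fst[OF hm] by simp
  also have "\<dots> \<le> (\<integral>\<^sup>+\<rho>. C \<partial>R)"
  proof (rule nn_integral_mono)
    fix \<rho> assume \<rho>: "\<rho> \<in> space R"
    have hm': "(\<lambda>x. h (\<rho>, x)) \<in> borel_measurable (PiM (insert t (I - {t})) (\<lambda>_. M))"
      unfolding ins using hm \<rho> by measurable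
    have "(\<integral>\<^sup>+x. h (\<rho>, x) \<partial>PiM I (\<lambda>_. M)) = (\<integral>\<^sup>+x. (\<integral>\<^sup>+z. h (\<rho>, x(t := z)) \<partial>M) \<partial>PiM (I - {t}) (\<lambda>_. M))"
      using P.product_nn_integral_insert[OF _ _ hm'] I unfolding ins by simp
    also have "\<dots> \<le> (\<integral>\<^sup>+x. C \<partial>PiM (I - {t}) (\<lambda>_. M))"
      by (rule nn_integral_mono) (use bd \<rho> in auto)
    also have "\<dots> = C" by (simp add: PI'.emeasure_space_1)
    finally show "(\<integral>\<^sup>+x. h (\<rho>, x) \<partial>PiM I (\<lambda>_. M)) \<le> C" .
  qed
  also have "\<dots> = C" by (simp add: R.emeasure_space_1)
  finally show ?thesis .
qed

lemma (in prob_space) integrable_of_sq_nn: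
  fixes f :: "_ \<Rightarrow> 'b::{banach, second_countable_topology}"
  assumes fm: "f \<in> borel_measurable M" and fin: "(\<integral>\<^sup>+x. ennreal ((norm (f x))^2) \<partial>M) < \<infinity>"
  shows "integrable M f"
proof -
  have "(\<integral>\<^sup>+x. ennreal (norm (f x)) \<partial>M) \<le> (\<integral>\<^sup>+x. (1 + ennreal ((norm (f x))^2)) \<partial>M)"
  proof (rule nn_integral_mono)
    fix x
    have "norm (f x) \<le> 1 + (norm (f x))^2"
    proof -
      have "0 \<le> (norm (f x) - 1/2)^2" by simp
      then have "0 \<le> 1 + (norm (f x))^2 - norm (f x) - 3/4" by (simp add: power2_eq_square algebra_simps)
      then show ?thesis by linarith
    qed
    then show "ennreal (norm (f x)) \<le> 1 + ennreal ((norm (f x))^2)"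
      by (metis ennreal_leI ennreal_plus ennreal_1 zero_le_one zero_le_power2)
  qed
  also have "\<dots> = 1 + (\<integral>\<^sup>+x. ennreal ((norm (f x))^2) \<partial>M)"
    using fm by (subst nn_integral_add) (auto simp: emeasure_space_1)
  also have "\<dots> < \<infinity>" using fin by simp
  finally show ?thesis using fm by (simp add: integrable_iff_bounded)
qed

locale conv_setting =
  fixes F :: "'a::euclidean_space \<Rightarrow> real" and gradF :: "'a \<Rightarrow> 'a"
    and G \<sigma> :: real and Xi :: "'e measure" and Orc :: "'a \<Rightarrow> 'e \<Rightarrow> 'a"
  assumes grad: "\<And>x. (F has_derivative (\<lambda>h. gradF x \<bullet> h)) (at x)"
    and ftc: "\<And>x w. ((\<lambda>t. gradF (w + t *\<^sub>R (x - w)) \<bullet> (x - w)) has_integral (F x - F w)) {0..1}"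
    and grad_bound: "\<And>x. norm (gradF x) \<le> G"
    and sigma_nonneg: "\<sigma> \<ge> 0"
    and Xi_prob: "prob_space Xi"
    and O_meas: "(\<lambda>p. Orc (fst p) (snd p)) \<in> borel_measurable (borel \<Otimes>\<^sub>M Xi)"
    and O_unbiased: "\<And>x. integrable Xi (Orc x) \<and> (\<integral>\<xi>. Orc x \<xi> \<partial>Xi) = gradF x"
    and O_variance: "\<And>x. integrable Xi (\<lambda>\<xi>. (norm (Orc x \<xi> - gradF x))^2) \<and>
                         (\<integral>\<xi>. (norm (Orc x \<xi> - gradF x))^2 \<partial>Xi) \<le> \<sigma>^2"
begin

sublocale Xi: prob_space Xi by (rule Xi_prob)

definition M0 :: "(real \<times> 'e) measure" where "M0 = U01 \<Otimes>\<^sub>M Xi"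

lemma prob_M0: "prob_space M0"
  unfolding M0_def using prob_U01 Xi_prob by (intro prob_space_pair) auto

lemma G_nonneg: "0 \<le> G" using grad_bound[of 0] norm_ge_zero order_trans by blast

lemma gradF_meas[measurable]: "gradF \<in> borel_measurable borel"
  using gradF_measurable grad by blast

lemma F_cont: "continuous_on UNIV F"
  using grad has_derivative_continuous continuous_at_imp_continuous_on by blast

lemma F_meas[measurable]: "F \<in> borel_measurable borel"
  using F_cont borel_measurable_continuous_onI by blast

lemma F_lip: "\<bar>F x - F w\<bar> \<le> G * norm (x - w)"
  using F_lipschitz[OF ftc grad_bound] .

lemma Orc_line_meas:
  "(\<lambda>z. Orc (x0 + fst z *\<^sub>R D) (snd z)) \<in> borel_measurable M0"
proof -
  have "(\<lambda>z. (x0 + fst z *\<^sub>R D, snd z)) \<in> measurable M0 (borel \<Otimes>\<^sub>M Xi)"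
    unfolding M0_def by measurable
  from measurable_comp[OF this O_meas] show ?thesis by (simp add: o_def)
qed

lemma noise_line_meas:
  "(\<lambda>z. Orc (x0 + fst z *\<^sub>R D) (snd z) - gradF (x0 + fst z *\<^sub>R D)) \<in> borel_measurable M0"
proof -
  have "(\<lambda>z. gradF (x0 + fst z *\<^sub>R D)) \<in> borel_measurable M0"
    unfolding M0_def by measurable
  then show ?thesis using Orc_line_meas by measurable
qed

lemma noise_sq_nn:
  "(\<integral>\<^sup>+z. ennreal ((norm (Orc (x0 + fst z *\<^sub>R D) (snd z) - gradF (x0 + fst z *\<^sub>R D)))^2) \<partial>M0) \<le> ennreal (\<sigma>^2)"
proof -
  interpret U: prob_space U01 by (rule prob_U01)
  have m: "(\<lambda>z. ennreal ((norm (Orc (x0 + fst z *\<^sub>R D) (snd z) - gradF (x0 + fst z *\<^sub>R D)))^2)) \<in> borel_measurable (U01 \<Otimes>\<^sub>M Xi)"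
    using noise_line_meas[of x0 D] unfolding M0_def by measurable
  have "(\<integral>\<^sup>+z. ennreal ((norm (Orc (x0 + fst z *\<^sub>R D) (snd z) - gradF (x0 + fst z *\<^sub>R D)))^2) \<partial>M0)
     = (\<integral>\<^sup>+a. (\<integral>\<^sup>+\<xi>. ennreal ((norm (Orc (x0 + a *\<^sub>R D) \<xi> - gradF (x0 + a *\<^sub>R D)))^2) \<partial>Xi) \<partial>U01)"
    unfolding M0_def using Xi.nn_integral_fst[OF m] by simp
  also have "\<dots> \<le> (\<integral>\<^sup>+a. ennreal (\<sigma>^2) \<partial>U01)"
  proof (rule nn_integral_mono)
    fix a
    let ?y = "x0 + a *\<^sub>R D"
    have "(\<integral>\<^sup>+\<xi>. ennreal ((norm (Orc ?y \<xi> - gradF ?y))^2) \<partial>Xi) = ennreal (\<integral>\<xi>. (norm (Orc ?y \<xi> - gradF ?y))^2 \<partial>Xi)"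
      using O_variance[of ?y] by (intro nn_integral_eq_integral) auto
    also have "\<dots> \<le> ennreal (\<sigma>^2)" using O_variance[of ?y] by (intro ennreal_leI) auto
    finally show "(\<integral>\<^sup>+\<xi>. ennreal ((norm (Orc ?y \<xi> - gradF ?y))^2) \<partial>Xi) \<le> ennreal (\<sigma>^2)" .
  qed
  also have "\<dots> = ennreal (\<sigma>^2)" using U.emeasure_space_1 by simp
  finally show ?thesis .
qed

lemma noise_line_integrable:
  "integrable M0 (\<lambda>z. Orc (x0 + fst z *\<^sub>R D) (snd z) - gradF (x0 + fst z *\<^sub>R D))"
proof -
  interpret M0: prob_space M0 by (rule prob_M0)
  show ?thesis
    using noise_sq_nn[of x0 D] noise_line_meas[of x0 D]
    by (intro M0.integrable_of_sq_nn) (auto simp: le_less_trans[OF _ ennreal_less_top])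
qed

lemma grad_line_integrable:
  "integrable M0 (\<lambda>z. gradF (x0 + fst z *\<^sub>R D))"
proof -
  interpret M0: prob_space M0 by (rule prob_M0)
  show ?thesis
    by (rule M0.integrable_const_bound[where B=G]) (auto simp: grad_bound M0_def)
qed

lemma Orc_line_integrable:
  "integrable M0 (\<lambda>z. Orc (x0 + fst z *\<^sub>R D) (snd z))"
proof -
  have "integrable M0 (\<lambda>z. (Orc (x0 + fst z *\<^sub>R D) (snd z) - gradF (x0 + fst z *\<^sub>R D)) + gradF (x0 + fst z *\<^sub>R D))"
    using noise_line_integrable grad_line_integrable by (rule Bochner_Integration.integrable_add)
  then show ?thesis by simp
qed

lemma inner_grad:
  "(\<integral>z. Orc (x0 + fst z *\<^sub>R D) (snd z) \<bullet> D \<partial>M0) = F (x0 + D) - F x0"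
proof -
  interpret U: prob_space U01 by (rule prob_U01)
  interpret UX: pair_sigma_finite U01 Xi by standard
  have i: "integrable (U01 \<Otimes>\<^sub>M Xi) (\<lambda>z. Orc (x0 + fst z *\<^sub>R D) (snd z) \<bullet> D)"
    using Orc_line_integrable[of x0 D] unfolding M0_def by auto
  have "(\<integral>z. Orc (x0 + fst z *\<^sub>R D) (snd z) \<bullet> D \<partial>M0) = (\<integral>a. (\<integral>\<xi>. Orc (x0 + a *\<^sub>R D) \<xi> \<bullet> D \<partial>Xi) \<partial>U01)"
    unfolding M0_def using UX.integral_fst'[OF i] by simp
  also have "\<dots> = (\<integral>a. gradF (x0 + a *\<^sub>R D) \<bullet> D \<partial>U01)"
    using O_unbiased by simp
  also have "\<dots> = F (x0 + D) - F x0"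
  proof (rule U01_integral(2))
    show "(\<lambda>a. gradF (x0 + a *\<^sub>R D) \<bullet> D) \<in> borel_measurable borel" by measurable
    fix a
    have "\<bar>gradF (x0 + a *\<^sub>R D) \<bullet> D\<bar> \<le> norm (gradF (x0 + a *\<^sub>R D)) * norm D"
      by (rule Cauchy_Schwarz_ineq2)
    also have "\<dots> \<le> G * norm D" using grad_bound by (simp add: mult_right_mono)
    finally show "\<bar>gradF (x0 + a *\<^sub>R D) \<bullet> D\<bar> \<le> G * norm D" .
  next
    show "((\<lambda>a. gradF (x0 + a *\<^sub>R D) \<bullet> D) has_integral F (x0 + D) - F x0) {0..1}"
      using ftc[where x="x0 + D" and w=x0] by (simp only: add_diff_cancel_left')
  qed
  finally show ?thesis .
qed

lemma inner_noise:
  "(\<integral>z. c \<bullet> (Orc (x0 + fst z *\<^sub>R D) (snd z) - gradF (x0 + fst z *\<^sub>R D)) \<partial>M0) = 0"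
proof -
  interpret U: prob_space U01 by (rule prob_U01)
  interpret UX: pair_sigma_finite U01 Xi by standard
  have i: "integrable (U01 \<Otimes>\<^sub>M Xi) (\<lambda>z. c \<bullet> (Orc (x0 + fst z *\<^sub>R D) (snd z) - gradF (x0 + fst z *\<^sub>R D)))"
    using noise_line_integrable[of x0 D] unfolding M0_def by auto
  have "(\<integral>z. c \<bullet> (Orc (x0 + fst z *\<^sub>R D) (snd z) - gradF (x0 + fst z *\<^sub>R D)) \<partial>M0)
     = (\<integral>a. (\<integral>\<xi>. c \<bullet> (Orc (x0 + a *\<^sub>R D) \<xi> - gradF (x0 + a *\<^sub>R D)) \<partial>Xi) \<partial>U01)"
    unfolding M0_def using UX.integral_fst'[OF i] by simp
  also have "\<dots> = (\<integral>a. 0 \<partial>U01)"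
  proof -
    have "(\<integral>\<xi>. c \<bullet> (Orc (x0 + a *\<^sub>R D) \<xi> - gradF (x0 + a *\<^sub>R D)) \<partial>Xi) = 0" for a
    proof -
      let ?y = "x0 + a *\<^sub>R D"
      have "integrable Xi (\<lambda>\<xi>. Orc ?y \<xi> - gradF ?y)" using O_unbiased[of ?y] by auto
      then have "(\<integral>\<xi>. c \<bullet> (Orc ?y \<xi> - gradF ?y) \<partial>Xi) = c \<bullet> (\<integral>\<xi>. (Orc ?y \<xi> - gradF ?y) \<partial>Xi)" by simp
      also have "(\<integral>\<xi>. (Orc ?y \<xi> - gradF ?y) \<partial>Xi) = 0"
        using O_unbiased[of ?y] by (simp add: Bochner_Integration.integral_diff Xi.prob_space)
      finally show ?thesis by simp
    qed
    then show ?thesis by simp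
  qed
  finally show ?thesis by simp
qed

end

lemma conv_grads_dep:
  assumes "fst \<omega> = fst \<omega>'" "\<And>j. 1 \<le> j \<Longrightarrow> j \<le> n \<Longrightarrow> snd \<omega> j = snd \<omega>' j"
  shows "conv_grads A Orc x0 mu \<omega> n = conv_grads A Orc x0 mu \<omega>' n"
  using assms(2)
proof (induction n)
  case 0 then show ?case by simp
next
  case (Suc n)
  then have IH: "conv_grads A Orc x0 mu \<omega> n = conv_grads A Orc x0 mu \<omega>' n" by auto
  have "snd \<omega> (Suc n) = snd \<omega>' (Suc n)" using Suc.prems by auto
  then show ?case using IH assms(1) by (simp add: Let_def)
qed

lemma conv_Delta_upd:
  assumes "s \<le> t"
  shows "conv_Delta A Orc x0 mu (\<rho>, x(t := z)) s = conv_Delta A Orc x0 mu (\<rho>, x) s"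
proof -
  have "conv_grads A Orc x0 mu (\<rho>, x(t := z)) (s - 1) = conv_grads A Orc x0 mu (\<rho>, x) (s - 1)"
    by (rule conv_grads_dep) (use assms in auto)
  then show ?thesis unfolding conv_Delta_def by simp
qed

lemma conv_y_upd_less:
  assumes "s < t"
  shows "conv_y A Orc x0 mu (\<rho>, x(t := z)) s = conv_y A Orc x0 mu (\<rho>, x) s"
  using assms conv_Delta_upd[of s t A Orc x0 mu \<rho> x z] unfolding conv_y_def by simp

lemma conv_g_upd_less:
  assumes "s < t"
  shows "conv_g A Orc x0 mu (\<rho>, x(t := z)) s = conv_g A Orc x0 mu (\<rho>, x) s"
  using assms conv_y_upd_less[of s t A Orc x0 mu \<rho> x z] unfolding conv_g_def by simp

lemma conv_y_upd_eq:
  "conv_y A Orc x0 mu (\<rho>, x(t := z)) t = x0 + fst z *\<^sub>R conv_Delta A Orc x0 mu (\<rho>, x) t"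
  using conv_Delta_upd[of t t A Orc x0 mu \<rho> x z] unfolding conv_y_def by simp

lemma conv_g_upd_eq:
  "conv_g A Orc x0 mu (\<rho>, x(t := z)) t = Orc (x0 + fst z *\<^sub>R conv_Delta A Orc x0 mu (\<rho>, x) t) (snd z)"
  using conv_y_upd_eq[of A Orc x0 mu \<rho> x t z] unfolding conv_g_def by simp

lemma conv_w_upd:
  "conv_w A Orc x0 mu (\<rho>, x(t := z)) t = conv_w A Orc x0 mu (\<rho>, x) t"
  using conv_Delta_upd[of t t A Orc x0 mu \<rho> x z] unfolding conv_w_def by simp

locale conv_run = conv_setting F gradF G \<sigma> Xi Orc
  for F :: "'a::euclidean_space \<Rightarrow> real" and gradF G \<sigma> and Xi :: "'e measure" and Orc +
  fixes R :: "'r measure" and A :: "'r \<Rightarrow> ('a \<Rightarrow> real) list \<Rightarrow> 'a" and x0 :: 'a and mu :: real and T :: nat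
  assumes R_prob: "prob_space R"
    and Delta_meas: "\<And>t. t \<in> {1..T} \<Longrightarrow> (\<lambda>\<omega>. conv_Delta A Orc x0 mu \<omega> t) \<in> borel_measurable (conv_space R Xi T)"
begin

abbreviation "Dl \<omega> t \<equiv> conv_Delta A Orc x0 mu \<omega> t"
abbreviation "yv \<omega> t \<equiv> conv_y A Orc x0 mu \<omega> t"
abbreviation "gv \<omega> t \<equiv> conv_g A Orc x0 mu \<omega> t"
abbreviation "wv \<omega> t \<equiv> conv_w A Orc x0 mu \<omega> t"
definition "zeta \<omega> t = gv \<omega> t - gradF (yv \<omega> t)"

lemma Om_eq: "conv_space R Xi T = R \<Otimes>\<^sub>M PiM {1..T} (\<lambda>_. M0)"
  unfolding conv_space_def M0_def U01_def ..

lemma prob_Om: "prob_space (conv_space R Xi T)"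
  unfolding Om_eq using R_prob prob_M0
  by (intro prob_space_pair prob_space_PiM) auto

sublocale Om: prob_space "conv_space R Xi T" by (rule prob_Om)

lemma coord_meas: "t \<in> {1..T} \<Longrightarrow> (\<lambda>\<omega>. snd \<omega> t) \<in> measurable (conv_space R Xi T) M0"
  unfolding Om_eq by measurable

lemma y_meas: "t \<in> {1..T} \<Longrightarrow> (\<lambda>\<omega>. yv \<omega> t) \<in> borel_measurable (conv_space R Xi T)"
proof -
  assume t: "t \<in> {1..T}"
  have "(\<lambda>\<omega>. fst (snd \<omega> t)) \<in> borel_measurable (conv_space R Xi T)"
    using measurable_comp[OF coord_meas[OF t, unfolded M0_def] measurable_fst]
    by (simp add: o_def cong: measurable_cong_sets)
  then show ?thesis unfolding conv_y_def using Delta_meas[OF t] by measurable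
qed

lemma g_meas: "t \<in> {1..T} \<Longrightarrow> (\<lambda>\<omega>. gv \<omega> t) \<in> borel_measurable (conv_space R Xi T)"
proof -
  assume t: "t \<in> {1..T}"
  have "(\<lambda>\<omega>. snd (snd \<omega> t)) \<in> measurable (conv_space R Xi T) Xi"
    using measurable_comp[OF coord_meas[OF t, unfolded M0_def] measurable_snd] by (simp add: o_def M0_def)
  then have "(\<lambda>\<omega>. (yv \<omega> t, snd (snd \<omega> t))) \<in> measurable (conv_space R Xi T) (borel \<Otimes>\<^sub>M Xi)"
    using y_meas[OF t] by (intro measurable_Pair) auto
  from measurable_comp[OF this O_meas] show ?thesis unfolding conv_g_def by (simp add: o_def)
qed

lemma zeta_meas: "t \<in> {1..T} \<Longrightarrow> (\<lambda>\<omega>. zeta \<omega> t) \<in> borel_measurable (conv_space R Xi T)"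
  unfolding zeta_def using g_meas y_meas by measurable

lemma w_meas: "t \<in> {1..T} \<Longrightarrow> (\<lambda>\<omega>. wv \<omega> t) \<in> borel_measurable (conv_space R Xi T)"
  unfolding conv_w_def using Delta_meas by measurable

lemma Fw_meas: "t \<in> {1..T} \<Longrightarrow> (\<lambda>\<omega>. F (wv \<omega> t)) \<in> borel_measurable (conv_space R Xi T)"
  using w_meas by measurable

lemma zeta_sq_nn: 
  assumes t: "t \<in> {1..T}"
  shows "(\<integral>\<^sup>+\<omega>. ennreal ((norm (zeta \<omega> t))^2) \<partial>conv_space R Xi T) \<le> ennreal (\<sigma>^2)"
  unfolding Om_eq
proof (rule resample_nn_bound[OF R_prob prob_M0 _ t])
  show "(\<lambda>\<omega>. ennreal ((norm (zeta \<omega> t))^2)) \<in> borel_measurable (R \<Otimes>\<^sub>M PiM {1..T} (\<lambda>_. M0))"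
    using zeta_meas[OF t] unfolding Om_eq by measurable
  fix \<rho> x
  have "zeta (\<rho>, x(t := z)) t = Orc (x0 + fst z *\<^sub>R Dl (\<rho>, x) t) (snd z) - gradF (x0 + fst z *\<^sub>R Dl (\<rho>, x) t)" for z
    unfolding zeta_def conv_g_upd_eq conv_y_upd_eq ..
  then show "(\<integral>\<^sup>+z. ennreal ((norm (zeta (\<rho>, x(t := z)) t))^2) \<partial>M0) \<le> ennreal (\<sigma>^2)"
    using noise_sq_nn[of x0 "Dl (\<rho>, x) t"] by simp
qed simp

lemma zeta_sq_integrable:
  assumes t: "t \<in> {1..T}"
  shows "integrable (conv_space R Xi T) (\<lambda>\<omega>. (norm (zeta \<omega> t))^2)"
proof -
  have "(\<integral>\<^sup>+\<omega>. ennreal (norm ((norm (zeta \<omega> t))^2)) \<partial>conv_space R Xi T) < \<infinity>"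
    using zeta_sq_nn[OF t] by (simp add: le_less_trans[OF _ ennreal_less_top])
  then show ?thesis using zeta_meas[OF t] by (subst integrable_iff_bounded) auto
qed

lemma zeta_sq_bound:
  assumes t: "t \<in> {1..T}"
  shows "(\<integral>\<omega>. (norm (zeta \<omega> t))^2 \<partial>conv_space R Xi T) \<le> \<sigma>^2"
proof -
  have "ennreal (\<integral>\<omega>. (norm (zeta \<omega> t))^2 \<partial>conv_space R Xi T) = (\<integral>\<^sup>+\<omega>. ennreal ((norm (zeta \<omega> t))^2) \<partial>conv_space R Xi T)"
    using zeta_sq_integrable[OF t] by (intro nn_integral_eq_integral[symmetric]) auto
  also have "\<dots> \<le> ennreal (\<sigma>^2)" by (rule zeta_sq_nn[OF t])
  finally show ?thesis by (auto simp: ennreal_le_iff2)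
qed

lemma prod_le_sq_sum:
  fixes a b :: real assumes "0 \<le> a" "0 \<le> b" shows "a * b \<le> a^2 + b^2"
proof -
  have "2 * a * b \<le> a^2 + b^2" using sum_squares_bound[of a b] by (simp add: power2_eq_square)
  moreover have "0 \<le> a * b" using assms by simp
  ultimately show ?thesis by linarith
qed

lemma zeta_cross_integrable:
  assumes s: "s \<in> {1..T}" and r: "r \<in> {1..T}"
  shows "integrable (conv_space R Xi T) (\<lambda>\<omega>. zeta \<omega> s \<bullet> zeta \<omega> r)"
proof (rule Bochner_Integration.integrable_bound)
  show "integrable (conv_space R Xi T) (\<lambda>\<omega>. (norm (zeta \<omega> s))^2 + (norm (zeta \<omega> r))^2)"
    using zeta_sq_integrable[OF s] zeta_sq_integrable[OF r] by (rule Bochner_Integration.integrable_add)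
  show "(\<lambda>\<omega>. zeta \<omega> s \<bullet> zeta \<omega> r) \<in> borel_measurable (conv_space R Xi T)"
    using zeta_meas[OF s] zeta_meas[OF r] by measurable
  show "AE \<omega> in conv_space R Xi T. norm (zeta \<omega> s \<bullet> zeta \<omega> r) \<le> norm ((norm (zeta \<omega> s))^2 + (norm (zeta \<omega> r))^2)"
  proof (intro AE_I2)
    fix \<omega>
    have "norm (zeta \<omega> s \<bullet> zeta \<omega> r) \<le> norm (zeta \<omega> s) * norm (zeta \<omega> r)"
      using Cauchy_Schwarz_ineq2 by simp
    also have "\<dots> \<le> (norm (zeta \<omega> s))^2 + (norm (zeta \<omega> r))^2"
      by (rule prod_le_sq_sum) auto
    finally show "norm (zeta \<omega> s \<bullet> zeta \<omega> r) \<le> norm ((norm (zeta \<omega> s))^2 + (norm (zeta \<omega> r))^2)"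
      by simp
  qed
qed

lemma zeta_cross:
  assumes s: "s \<in> {1..T}" and r: "r \<in> {1..T}" and sr: "s < r"
  shows "(\<integral>\<omega>. zeta \<omega> s \<bullet> zeta \<omega> r \<partial>conv_space R Xi T) = 0"
proof -
  have hi: "integrable (R \<Otimes>\<^sub>M PiM {1..T} (\<lambda>_. M0)) (\<lambda>\<omega>. zeta \<omega> s \<bullet> zeta \<omega> r)"
    using zeta_cross_integrable[OF s r] unfolding Om_eq .
  have inner: "(\<integral>z. zeta (\<rho>, x(r := z)) s \<bullet> zeta (\<rho>, x(r := z)) r \<partial>M0) = 0" for \<rho> x
  proof -
    have "zeta (\<rho>, x(r := z)) s \<bullet> zeta (\<rho>, x(r := z)) r =
      zeta (\<rho>, x) s \<bullet> (Orc (x0 + fst z *\<^sub>R Dl (\<rho>, x) r) (snd z) - gradF (x0 + fst z *\<^sub>R Dl (\<rho>, x) r))" for z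
      unfolding zeta_def conv_g_upd_eq conv_y_upd_eq conv_g_upd_less[OF sr] conv_y_upd_less[OF sr] ..
    then show ?thesis using inner_noise[of "zeta (\<rho>, x) s" x0 "Dl (\<rho>, x) r"] by simp
  qed
  show ?thesis
    unfolding Om_eq resample_integral[OF R_prob prob_M0 finite_atLeastAtMost r hi] inner by simp
qed

lemma real_prod_bound:
  fixes a b c K :: real
  assumes "0 \<le> a" "0 \<le> b" "a \<le> c + K" "0 \<le> c" "0 \<le> K"
  shows "a * b \<le> 2 * c^2 + 2 * K^2 + b^2"
proof -
  have 1: "2 * (a * b) \<le> a^2 + b^2" using sum_squares_bound[of a b] by (simp add: power2_eq_square)
  have 2: "a^2 \<le> (c + K)^2" using assms by (intro power_mono) auto
  have 3: "(c + K)^2 \<le> 2 * c^2 + 2 * K^2" using sum_squares_bound[of c K] by (simp add: power2_eq_square algebra_simps)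
  have 4: "a^2 \<le> 2 * c^2 + 2 * K^2" using 2 3 by (rule order_trans)
  have "0 \<le> c^2" "0 \<le> K^2" "0 \<le> b^2" by auto
  then show ?thesis using 1 4 by linarith
qed

lemma norm_le_1_sq: "(x::real) \<le> 1 + x^2"
proof -
  have "0 \<le> (x - 1/2)^2" by simp
  then have "0 \<le> 1 + x^2 - x - 3/4" by (simp add: power2_eq_square algebra_simps)
  then show ?thesis by linarith
qed

lemma g_Delta_integrable:
  assumes t: "t \<in> {1..T}" and D2: "integrable (conv_space R Xi T) (\<lambda>\<omega>. (norm (Dl \<omega> t))^2)"
  shows "integrable (conv_space R Xi T) (\<lambda>\<omega>. gv \<omega> t \<bullet> Dl \<omega> t)"
proof (rule Bochner_Integration.integrable_bound)
  show "integrable (conv_space R Xi T) (\<lambda>\<omega>. 2 * (norm (zeta \<omega> t))^2 + 2 * G^2 + (norm (Dl \<omega> t))^2)"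
    using zeta_sq_integrable[OF t] D2 by auto
  show "(\<lambda>\<omega>. gv \<omega> t \<bullet> Dl \<omega> t) \<in> borel_measurable (conv_space R Xi T)"
    using g_meas[OF t] Delta_meas[OF t] by measurable
  show "AE \<omega> in conv_space R Xi T. norm (gv \<omega> t \<bullet> Dl \<omega> t) \<le> norm (2 * (norm (zeta \<omega> t))^2 + 2 * G^2 + (norm (Dl \<omega> t))^2)"
  proof (intro AE_I2)
    fix \<omega>
    have a: "norm (gv \<omega> t) \<le> norm (zeta \<omega> t) + G"
    proof -
      have "gv \<omega> t = zeta \<omega> t + gradF (yv \<omega> t)" unfolding zeta_def by simp
      then have "norm (gv \<omega> t) \<le> norm (zeta \<omega> t) + norm (gradF (yv \<omega> t))" by (metis norm_triangle_ineq)
      then show ?thesis using grad_bound[of "yv \<omega> t"] by linarith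
    qed
    have "norm (gv \<omega> t \<bullet> Dl \<omega> t) \<le> norm (gv \<omega> t) * norm (Dl \<omega> t)"
      using Cauchy_Schwarz_ineq2 by simp
    also have "\<dots> \<le> 2 * (norm (zeta \<omega> t))^2 + 2 * G^2 + (norm (Dl \<omega> t))^2"
      by (rule real_prod_bound) (use a G_nonneg in auto)
    finally show "norm (gv \<omega> t \<bullet> Dl \<omega> t) \<le> norm (2 * (norm (zeta \<omega> t))^2 + 2 * G^2 + (norm (Dl \<omega> t))^2)"
      by simp
  qed
qed

lemma Fw_integrable:
  assumes t: "t \<in> {1..T}" and D2: "integrable (conv_space R Xi T) (\<lambda>\<omega>. (norm (Dl \<omega> t))^2)"
  shows "integrable (conv_space R Xi T) (\<lambda>\<omega>. F (wv \<omega> t) - F x0)"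
proof (rule Bochner_Integration.integrable_bound)
  show "integrable (conv_space R Xi T) (\<lambda>\<omega>. G + G * (norm (Dl \<omega> t))^2)"
    using D2 by auto
  show "(\<lambda>\<omega>. F (wv \<omega> t) - F x0) \<in> borel_measurable (conv_space R Xi T)"
    using Fw_meas[OF t] by measurable
  show "AE \<omega> in conv_space R Xi T. norm (F (wv \<omega> t) - F x0) \<le> norm (G + G * (norm (Dl \<omega> t))^2)"
  proof (intro AE_I2)
    fix \<omega>
    have "\<bar>F (wv \<omega> t) - F x0\<bar> \<le> G * norm (wv \<omega> t - x0)" by (rule F_lip)
    also have "\<dots> = G * norm (Dl \<omega> t)" unfolding conv_w_def by simp
    also have "\<dots> \<le> G * (1 + (norm (Dl \<omega> t))^2)"
      using G_nonneg norm_le_1_sq by (intro mult_left_mono) auto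
    finally show "norm (F (wv \<omega> t) - F x0) \<le> norm (G + G * (norm (Dl \<omega> t))^2)"
      using G_nonneg by (simp add: algebra_simps)
  qed
qed

lemma g_Delta_eq:
  assumes t: "t \<in> {1..T}" and D2: "integrable (conv_space R Xi T) (\<lambda>\<omega>. (norm (Dl \<omega> t))^2)"
  shows "(\<integral>\<omega>. gv \<omega> t \<bullet> Dl \<omega> t \<partial>conv_space R Xi T) = (\<integral>\<omega>. F (wv \<omega> t) - F x0 \<partial>conv_space R Xi T)"
proof -
  interpret M0: prob_space M0 by (rule prob_M0)
  have i1: "integrable (R \<Otimes>\<^sub>M PiM {1..T} (\<lambda>_. M0)) (\<lambda>\<omega>. gv \<omega> t \<bullet> Dl \<omega> t)"
    using g_Delta_integrable[OF t D2] unfolding Om_eq .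
  have i2: "integrable (R \<Otimes>\<^sub>M PiM {1..T} (\<lambda>_. M0)) (\<lambda>\<omega>. F (wv \<omega> t) - F x0)"
    using Fw_integrable[OF t D2] unfolding Om_eq .
  have in1: "(\<integral>z. gv (\<rho>, x(t := z)) t \<bullet> Dl (\<rho>, x(t := z)) t \<partial>M0) = F (wv (\<rho>, x) t) - F x0" for \<rho> x
  proof -
    have "gv (\<rho>, x(t := z)) t \<bullet> Dl (\<rho>, x(t := z)) t = Orc (x0 + fst z *\<^sub>R Dl (\<rho>, x) t) (snd z) \<bullet> Dl (\<rho>, x) t" for z
      unfolding conv_g_upd_eq conv_Delta_upd[OF order_refl] ..
    then show ?thesis using inner_grad[of x0 "Dl (\<rho>, x) t"] by (simp add: conv_w_def)
  qed
  have in2: "(\<integral>z. F (wv (\<rho>, x(t := z)) t) - F x0 \<partial>M0) = F (wv (\<rho>, x) t) - F x0" for \<rho> x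
    unfolding conv_w_upd by (simp add: M0.prob_space)
  show ?thesis
    unfolding Om_eq resample_integral[OF R_prob prob_M0 finite_atLeastAtMost t i1]
      resample_integral[OF R_prob prob_M0 finite_atLeastAtMost t i2] in1 in2 ..
qed

end

context conv_run begin

lemma norm_sum_sq_expand:
  fixes v :: "nat \<Rightarrow> 'a"
  shows "(norm (\<Sum>s\<in>S. c s *\<^sub>R v s))^2 = (\<Sum>s\<in>S. \<Sum>r\<in>S. c s * c r * (v s \<bullet> v r))"
  unfolding power2_norm_eq_inner inner_sum_left inner_sum_right
  by (simp add: algebra_simps inner_commute)

lemma noise_sum_sq:
  assumes S: "S \<subseteq> {1..T}"
  shows "integrable (conv_space R Xi T) (\<lambda>\<omega>. (norm (\<Sum>s\<in>S. c s *\<^sub>R zeta \<omega> s))^2)"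
    "(\<integral>\<omega>. (norm (\<Sum>s\<in>S. c s *\<^sub>R zeta \<omega> s))^2 \<partial>conv_space R Xi T) \<le> \<sigma>^2 * (\<Sum>s\<in>S. (c s)^2)"
proof -
  have fin: "finite S" using S finite_subset by blast
  have ii: "integrable (conv_space R Xi T) (\<lambda>\<omega>. c s * c r * (zeta \<omega> s \<bullet> zeta \<omega> r))" if "s \<in> S" "r \<in> S" for s r
  proof -
    have "s \<in> {1..T}" "r \<in> {1..T}" using that S by auto
    from zeta_cross_integrable[OF this] show ?thesis by auto
  qed
  show int: "integrable (conv_space R Xi T) (\<lambda>\<omega>. (norm (\<Sum>s\<in>S. c s *\<^sub>R zeta \<omega> s))^2)"
    unfolding norm_sum_sq_expand using ii by (intro Bochner_Integration.integrable_sum) auto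
  have cr: "c s * c r * (\<integral>\<omega>. (zeta \<omega> s \<bullet> zeta \<omega> r) \<partial>conv_space R Xi T) =
      (if s = r then (c s)^2 * (\<integral>\<omega>. (norm (zeta \<omega> s))^2 \<partial>conv_space R Xi T) else 0)"
    if "s \<in> S" "r \<in> S" for s r
  proof (cases "s = r")
    case True
    show ?thesis unfolding True power2_norm_eq_inner by (simp add: power2_eq_square)
  next
    case False
    have sm: "s \<in> {1..T}" "r \<in> {1..T}" using that S by auto
    from False consider "s < r" | "r < s" by linarith
    then have "(\<integral>\<omega>. zeta \<omega> s \<bullet> zeta \<omega> r \<partial>conv_space R Xi T) = 0"
    proof cases
      case 1 then show ?thesis using zeta_cross[OF sm] by auto
    next
      case 2 then show ?thesis using zeta_cross[OF sm(2,1)] by (auto simp: inner_commute)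
    qed
    then show ?thesis using False by simp
  qed
  have "(\<integral>\<omega>. (norm (\<Sum>s\<in>S. c s *\<^sub>R zeta \<omega> s))^2 \<partial>conv_space R Xi T)
     = (\<Sum>s\<in>S. \<Sum>r\<in>S. c s * c r * (\<integral>\<omega>. (zeta \<omega> s \<bullet> zeta \<omega> r) \<partial>conv_space R Xi T))"
    unfolding norm_sum_sq_expand
    using ii by (simp add: Bochner_Integration.integral_sum Bochner_Integration.integrable_sum)
  also have "\<dots> = (\<Sum>s\<in>S. (c s)^2 * (\<integral>\<omega>. (norm (zeta \<omega> s))^2 \<partial>conv_space R Xi T))"
    using fin by (simp add: cr if_distrib cong: sum.cong)
  also have "\<dots> \<le> (\<Sum>s\<in>S. (c s)^2 * \<sigma>^2)"
    using zeta_sq_bound S by (intro sum_mono mult_left_mono) auto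
  finally show "(\<integral>\<omega>. (norm (\<Sum>s\<in>S. c s *\<^sub>R zeta \<omega> s))^2 \<partial>conv_space R Xi T) \<le> \<sigma>^2 * (\<Sum>s\<in>S. (c s)^2)"
    by (simp add: sum_distrib_left mult.commute)
qed

end

lemma lambda_norm_le:
  fixes gradF :: "'a::euclidean_space \<Rightarrow> 'a" and ys :: "nat \<Rightarrow> 'a" and wt :: "nat \<Rightarrow> real"
  assumes gm: "gradF \<in> borel_measurable borel" and S: "finite S"
    and wn: "\<And>s. s \<in> S \<Longrightarrow> 0 \<le> wt s" and w1: "(\<Sum>s\<in>S. wt s) = 1" and lam: "0 \<le> lam"
  shows "lambda_norm gradF lam (\<Sum>s\<in>S. wt s *\<^sub>R ys s) \<le>
     norm (\<Sum>s\<in>S. wt s *\<^sub>R gradF (ys s)) + lam * (\<Sum>s\<in>S. wt s * (norm (ys s - (\<Sum>s\<in>S. wt s *\<^sub>R ys s)))^2)"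
    and "0 \<le> lambda_norm gradF lam (\<Sum>s\<in>S. wt s *\<^sub>R ys s)"
proof -
  define m where "m = (\<Sum>s\<in>S. wt s *\<^sub>R ys s)"
  define f where "f = (\<lambda>s. if s \<in> S then wt s else 0)"
  have fn: "\<And>s. 0 \<le> f s" unfolding f_def using wn by auto
  have f1: "(\<integral>\<^sup>+s. ennreal (f s) \<partial>count_space UNIV) = 1"
  proof -
    have "(\<integral>\<^sup>+s. ennreal (f s) \<partial>count_space UNIV) = (\<Sum>s\<in>S. ennreal (f s))"
      by (rule nn_integral_count_space') (use S in \<open>auto simp: f_def\<close>)
    also have "\<dots> = ennreal (\<Sum>s\<in>S. f s)" using fn by (simp add: sum_ennreal)
    also have "(\<Sum>s\<in>S. f s) = 1" using w1 by (simp add: f_def)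
    finally show ?thesis by simp
  qed
  define q where "q = embed_pmf f"
  have pq: "pmf q s = f s" for s unfolding q_def by (rule pmf_embed_pmf[OF fn f1])
  have sq: "set_pmf q \<subseteq> S" using pq by (auto simp: set_pmf_eq f_def)
  have finq: "finite (set_pmf q)" using sq S finite_subset by blast
  define p where "p = distr (measure_pmf q) borel ys"
  have ysm: "ys \<in> measurable (measure_pmf q) borel" by simp
  have intp: "integrable p g" if "g \<in> borel_measurable borel" for g :: "'a \<Rightarrow> 'b::{banach, second_countable_topology}"
    unfolding p_def using that integrable_measure_pmf_finite[OF finq]
    by (subst integrable_distr_eq[OF ysm]) auto
  have intg: "(\<integral>w. g w \<partial>p) = (\<Sum>s\<in>S. wt s *\<^sub>R g (ys s))" if "g \<in> borel_measurable borel" for g :: "'a \<Rightarrow> 'b::{banach, second_countable_topology}"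
  proof -
    have "(\<integral>w. g w \<partial>p) = (\<integral>s. g (ys s) \<partial>measure_pmf q)"
      unfolding p_def using that by (subst integral_distr[OF ysm]) auto
    also have "\<dots> = (\<Sum>s\<in>S. pmf q s *\<^sub>R g (ys s))"
      by (rule integral_measure_pmf[OF S]) (use sq in auto)
    also have "\<dots> = (\<Sum>s\<in>S. wt s *\<^sub>R g (ys s))" by (simp add: pq f_def)
    finally show ?thesis .
  qed
  have pp: "prob_space p" unfolding p_def by (rule prob_space.prob_space_distr) (auto simp: measure_pmf.prob_space_axioms)
  have memb: "norm (\<Sum>s\<in>S. wt s *\<^sub>R gradF (ys s)) + lam * (\<Sum>s\<in>S. wt s * (norm (ys s - m))^2) \<in>
     {norm (\<integral>w. gradF w \<partial>p) + lam * (\<integral>w. (norm (w - m))^2 \<partial>p) | p.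
            prob_space p \<and> sets p = sets borel \<and>
            integrable p (\<lambda>w. w) \<and> (\<integral>w. w \<partial>p) = m \<and>
            integrable p (\<lambda>w. (norm (w - m))^2) \<and> integrable p gradF}"
  proof -
    have a1: "(\<integral>w. w \<partial>p) = m" using intg[of "\<lambda>w. w"] by (simp add: m_def)
    have a2: "(\<integral>w. gradF w \<partial>p) = (\<Sum>s\<in>S. wt s *\<^sub>R gradF (ys s))" using intg[OF gm] .
    have a3: "(\<integral>w. (norm (w - m))^2 \<partial>p) = (\<Sum>s\<in>S. wt s * (norm (ys s - m))^2)"
      using intg[of "\<lambda>w. (norm (w - m))^2"] by simp
    have a4: "sets p = sets borel" unfolding p_def by simp
    have a5: "integrable p (\<lambda>w. w)" by (rule intp) measurable
    have a6: "integrable p (\<lambda>w. (norm (w - m))^2)" by (rule intp) measurable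
    have a7: "integrable p gradF" by (rule intp[OF gm])
    show ?thesis unfolding mem_Collect_eq
      by (intro exI[of _ p] conjI pp a1 a4 a5 a6 a7) (simp add: a2 a3)
  qed
  have bdd: "bdd_below {norm (\<integral>w. gradF w \<partial>p) + lam * (\<integral>w. (norm (w - m))^2 \<partial>p) | p.
            prob_space p \<and> sets p = sets borel \<and>
            integrable p (\<lambda>w. w) \<and> (\<integral>w. w \<partial>p) = m \<and>
            integrable p (\<lambda>w. (norm (w - m))^2) \<and> integrable p gradF}"
    by (rule bdd_belowI[where m=0]) (use lam in \<open>auto intro!: add_nonneg_nonneg mult_nonneg_nonneg integral_nonneg_AE\<close>)
  show "lambda_norm gradF lam (\<Sum>s\<in>S. wt s *\<^sub>R ys s) \<le>
     norm (\<Sum>s\<in>S. wt s *\<^sub>R gradF (ys s)) + lam * (\<Sum>s\<in>S. wt s * (norm (ys s - (\<Sum>s\<in>S. wt s *\<^sub>R ys s)))^2)"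
    unfolding lambda_norm_def m_def[symmetric] using cInf_lower[OF memb bdd] .
  show "0 \<le> lambda_norm gradF lam (\<Sum>s\<in>S. wt s *\<^sub>R ys s)"
    unfolding lambda_norm_def m_def[symmetric]
    by (rule cInf_greatest) (use memb lam in \<open>auto intro!: add_nonneg_nonneg mult_nonneg_nonneg integral_nonneg_AE\<close>)
qed

lemma variance_le_second_moment:
  fixes ys :: "nat \<Rightarrow> 'a::real_inner" and wt :: "nat \<Rightarrow> real"
  assumes S: "finite S" and wn: "\<And>s. s \<in> S \<Longrightarrow> 0 \<le> wt s" and w1: "(\<Sum>s\<in>S. wt s) = 1"
  shows "(\<Sum>s\<in>S. wt s * (norm (ys s - (\<Sum>s\<in>S. wt s *\<^sub>R ys s)))^2) \<le> (\<Sum>s\<in>S. wt s * (norm (ys s - c))^2)"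
proof -
  define m where "m = (\<Sum>s\<in>S. wt s *\<^sub>R ys s)"
  have e: "(norm (ys s - c))^2 = (norm (ys s - m))^2 + 2 * ((ys s - m) \<bullet> (m - c)) + (norm (m - c))^2" for s
  proof -
    have g: "(norm (a + b))^2 = (norm a)^2 + 2 * (a \<bullet> b) + (norm b)^2" for a b :: 'a
      by (simp add: power2_norm_eq_inner inner_add_left inner_add_right inner_commute)
    have "ys s - c = (ys s - m) + (m - c)" by simp
    then have "(norm (ys s - c))^2 = (norm ((ys s - m) + (m - c)))^2" by simp
    then show ?thesis unfolding g .
  qed
  have z: "(\<Sum>s\<in>S. wt s * ((ys s - m) \<bullet> (m - c))) = 0"
  proof -
    have "(\<Sum>s\<in>S. wt s * ((ys s - m) \<bullet> (m - c))) = (\<Sum>s\<in>S. wt s *\<^sub>R (ys s - m)) \<bullet> (m - c)"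
      by (simp add: inner_sum_left)
    also have "(\<Sum>s\<in>S. wt s *\<^sub>R (ys s - m)) = m - (\<Sum>s\<in>S. wt s) *\<^sub>R m"
      by (simp add: m_def scaleR_diff_right sum_subtractf scaleR_sum_left)
    also have "\<dots> = 0" using w1 by simp
    finally show ?thesis by simp
  qed
  have L: "\<And>w A B C::real. w * (A + 2 * B + C) = w * A + 2 * (w * B) + w * C" by (simp add: algebra_simps)
  have "(\<Sum>s\<in>S. wt s * (norm (ys s - c))^2) = (\<Sum>s\<in>S. wt s * (norm (ys s - m))^2 + 2 * (wt s * ((ys s - m) \<bullet> (m - c))) + wt s * (norm (m - c))^2)"
    unfolding e L ..
  also have "\<dots> = (\<Sum>s\<in>S. wt s * (norm (ys s - m))^2) + 2 * (\<Sum>s\<in>S. wt s * ((ys s - m) \<bullet> (m - c))) + (\<Sum>s\<in>S. wt s) * (norm (m - c))^2"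
    by (simp only: sum.distrib sum_distrib_left[symmetric] sum_distrib_right[symmetric])
  also have "\<dots> = (\<Sum>s\<in>S. wt s * (norm (ys s - m))^2) + (norm (m - c))^2" using z w1 by simp
  finally show ?thesis unfolding m_def[symmetric] by simp
qed

definition Sb :: "real \<Rightarrow> (nat \<Rightarrow> real) \<Rightarrow> nat \<Rightarrow> real" where
  "Sb \<beta> a t = (\<Sum>s=1..t. \<beta>^(t-s) * a s)"

definition cw :: "real \<Rightarrow> nat \<Rightarrow> nat \<Rightarrow> real" where
  "cw \<beta> T t = (if t < T then 1 - \<beta> else 1)"

lemma Sb_0[simp]: "Sb \<beta> a 0 = 0" by (simp add: Sb_def)

lemma Sb_Suc: "Sb \<beta> a (Suc t) = \<beta> * Sb \<beta> a t + a (Suc t)"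
proof -
  have "Sb \<beta> a (Suc t) = (\<Sum>s=1..t. \<beta>^(Suc t - s) * a s) + a (Suc t)"
    unfolding Sb_def by (simp add: sum.atLeast1_atMost_eq)
  also have "(\<Sum>s=1..t. \<beta>^(Suc t - s) * a s) = \<beta> * (\<Sum>s=1..t. \<beta>^(t - s) * a s)"
    by (auto simp: sum_distrib_left Suc_diff_le mult.assoc intro!: sum.cong)
  finally show ?thesis by (simp add: Sb_def)
qed

lemma Sb_telescope: "(1 - \<beta>) * (\<Sum>t<T. Sb \<beta> a t) + Sb \<beta> a T = (\<Sum>s=1..T. a s)"
proof (induction T)
  case 0 then show ?case by simp
next
  case (Suc T)
  have "(1 - \<beta>) * (\<Sum>t<Suc T. Sb \<beta> a t) + Sb \<beta> a (Suc T)
      = ((1 - \<beta>) * (\<Sum>t<T. Sb \<beta> a t) + Sb \<beta> a T) + a (Suc T)"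
    by (simp add: Sb_Suc algebra_simps)
  also have "\<dots> = (\<Sum>s=1..Suc T. a s)" using Suc by simp
  finally show ?case .
qed

lemma cw_sum_split:
  assumes "1 \<le> T"
  shows "(\<Sum>t=1..T. cw \<beta> T t * X t) = (1 - \<beta>) * (\<Sum>t\<in>{1..<T}. X t) + X T"
proof -
  have "{1..T} = insert T {1..<T}" using assms by auto
  then have "(\<Sum>t=1..T. cw \<beta> T t * X t) = cw \<beta> T T * X T + (\<Sum>t\<in>{1..<T}. cw \<beta> T t * X t)"
    by simp
  also have "(\<Sum>t\<in>{1..<T}. cw \<beta> T t * X t) = (1 - \<beta>) * (\<Sum>t\<in>{1..<T}. X t)"
    by (simp add: cw_def sum_distrib_left)
  finally show ?thesis by (simp add: cw_def)
qed

lemma cw_Sb_identity: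
  assumes "1 \<le> T"
  shows "(\<Sum>t=1..T. cw \<beta> T t * Sb \<beta> a t) = (\<Sum>s=1..T. a s)"
proof -
  have "(\<Sum>t<T. Sb \<beta> a t) = (\<Sum>t\<in>{1..<T}. Sb \<beta> a t)"
  proof -
    have "{..<T} = insert 0 {1..<T}" using assms by auto
    then show ?thesis by simp
  qed
  then show ?thesis using Sb_telescope[where \<beta>=\<beta> and T=T and a=a] cw_sum_split[OF assms] by simp
qed

lemma Sb_one_geom:
  assumes "\<beta> \<noteq> 1"
  shows "Sb \<beta> (\<lambda>_. 1) t = (1 - \<beta>^t) / (1 - \<beta>)"
proof (induction t)
  case 0 then show ?case by simp
next
  case (Suc t)
  have ne: "1 - \<beta> \<noteq> 0" using assms by simp
  have "Sb \<beta> (\<lambda>_. 1) (Suc t) = \<beta> * ((1 - \<beta>^t) / (1 - \<beta>)) + 1" by (simp add: Sb_Suc Suc.IH)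
  also have "\<dots> = (1 - \<beta>^Suc t) / (1 - \<beta>)" using ne by (simp add: field_simps)
  finally show ?case .
qed

lemma Sb_one_ge1:
  assumes "0 \<le> \<beta>" "1 \<le> t"
  shows "1 \<le> Sb \<beta> (\<lambda>_. 1) t"
proof -
  have "Sb \<beta> (\<lambda>_. 1) t = (\<Sum>s=1..t. \<beta>^(t-s))" by (simp add: Sb_def)
  also have "\<dots> \<ge> (\<Sum>s\<in>{t}. \<beta>^(t-s))"
    using assms by (intro sum_mono2) auto
  finally show ?thesis by simp
qed

lemma tau_prob_eq:
  assumes "0 \<le> \<beta>" "\<beta> < 1" "t \<in> {1..T}"
  shows "tau_prob \<beta> T t = cw \<beta> T t * Sb \<beta> (\<lambda>_. 1) t / real T"
proof -
  have e: "Sb \<beta> (\<lambda>_. 1) t = (1 - \<beta>^t) / (1 - \<beta>)" using assms by (simp add: Sb_one_geom)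
  have ne: "1 - \<beta> \<noteq> 0" using assms by simp
  show ?thesis unfolding e tau_prob_def cw_def using assms ne by auto
qed

lemma cw_sum_le:
  assumes "1 \<le> T" "\<beta> \<le> 1"
  shows "(\<Sum>t=1..T. cw \<beta> T t) \<le> real T * (1 - \<beta>) + 1"
proof -
  have "(\<Sum>t=1..T. cw \<beta> T t) = (\<Sum>t=1..T. cw \<beta> T t * 1)" by simp
  also have "\<dots> = (1 - \<beta>) * real (T - 1) + 1" unfolding cw_sum_split[OF assms(1)] by simp
  also have "\<dots> \<le> real T * (1 - \<beta>) + 1" using assms by (simp add: of_nat_diff algebra_simps)
  finally show ?thesis .
qed

lemma sq_geom_le:
  fixes \<beta> :: real
  assumes "0 \<le> \<beta>" "\<beta> < 1"
  shows "(\<Sum>s=1..t. (\<beta>^(t-s))^2) \<le> 1 / (1 - \<beta>)"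
proof -
  have "(\<Sum>s=1..t. (\<beta>^(t-s))^2) \<le> (\<Sum>s=1..t. \<beta>^(t-s))"
  proof (intro sum_mono)
    fix s
    have "\<beta>^(t-s) \<le> 1" using assms by (simp add: power_le_one)
    then have "\<beta>^(t-s) * \<beta>^(t-s) \<le> 1 * \<beta>^(t-s)" using assms by (intro mult_right_mono) auto
    then show "(\<beta>^(t-s))^2 \<le> \<beta>^(t-s)" by (simp add: power2_eq_square)
  qed
  also have "\<dots> = Sb \<beta> (\<lambda>_. 1) t" by (simp add: Sb_def)
  also have "\<dots> = (1 - \<beta>^t) / (1 - \<beta>)" using assms by (simp add: Sb_one_geom)
  also have "\<dots> \<le> 1 / (1 - \<beta>)" using assms by (intro divide_right_mono) auto
  finally show ?thesis .
qed

lemma amgm_mu: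
  fixes x y mu :: real
  assumes "0 < mu"
  shows "x * y \<le> x^2 / mu + mu / 4 * y^2"
proof -
  have "0 \<le> (x - mu / 2 * y)^2" by simp
  then have "mu * (x * y) \<le> x^2 + mu^2 / 4 * y^2" by (simp add: power2_eq_square algebra_simps)
  then have "mu * (x * y) \<le> mu * (x^2 / mu + mu / 4 * y^2)"
    using assms by (simp add: algebra_simps power2_eq_square)
  then show ?thesis using assms by simp
qed

locale conv_main = conv_run F gradF G \<sigma> Xi Orc R A x0 mu T
  for F :: "'a::euclidean_space \<Rightarrow> real" and gradF G \<sigma> and Xi :: "'e measure" and Orc
    and R :: "'r measure" and A x0 mu T +
  fixes lam \<epsilon> \<beta> :: real
  assumes lam_pos: "lam > 0"
    and eps_pos: "\<epsilon> > 0"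
    and eps_le: "\<epsilon> \<le> 7/2 * (G + \<sigma>)"
    and T_ge: "real T \<ge> 49 * (G + \<sigma>)^2 / \<epsilon>^2"
    and beta_def: "\<beta> = 1 - (\<epsilon> / (7 * (G + \<sigma>)))^2"
    and mu_def: "mu = 2 * sqrt lam * sqrt \<epsilon>"
    and learner_regret: "\<And>t u. t \<in> {1..T} \<Longrightarrow>
          u \<in> borel_measurable (conv_space R Xi T) \<Longrightarrow>
          integrable (conv_space R Xi T) (\<lambda>\<omega>. (norm (u \<omega>))^2) \<Longrightarrow>
          integrable (conv_space R Xi T)
             (\<lambda>\<omega>. regret_beta \<beta> (\<lambda>s. lin_quad_loss mu (conv_g A Orc x0 mu \<omega> s))
                     (conv_Delta A Orc x0 mu \<omega>) t (u \<omega>)) \<and>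
          (\<integral>\<omega>. regret_beta \<beta> (\<lambda>s. lin_quad_loss mu (conv_g A Orc x0 mu \<omega> s))
                     (conv_Delta A Orc x0 mu \<omega>) t (u \<omega>) \<partial>conv_space R Xi T)
            \<le> (\<integral>\<omega>. 2 * norm (u \<omega>) * (G + \<sigma>) / (\<beta> * sqrt (1 - \<beta>)) + mu / 2 * (norm (u \<omega>))^2
                  \<partial>conv_space R Xi T)"
begin

definition "GS = G + \<sigma>"
definition "kk = \<epsilon> / (7 * GS)"

lemma GS_pos: "0 < GS"
proof -
  have "2 * \<epsilon> \<le> 7 * (G + \<sigma>)" using eps_le by simp
  then show ?thesis using eps_pos unfolding GS_def by argo
qed

lemma kk_pos: "0 < kk" unfolding kk_def using GS_pos eps_pos by simp

lemma kk_le: "kk \<le> 1/2"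
  unfolding kk_def using GS_pos eps_le by (simp add: GS_def divide_le_eq)

lemma beta_kk: "1 - \<beta> = kk^2" unfolding beta_def kk_def GS_def by simp

lemma sqrt_1_beta: "sqrt (1 - \<beta>) = kk" using beta_kk kk_pos by simp

lemma beta_lt1: "\<beta> < 1"
proof -
  have "0 < kk^2" using kk_pos by simp
  then show ?thesis using beta_kk by linarith
qed

lemma beta_ge: "3/4 \<le> \<beta>"
proof -
  have "kk^2 \<le> (1/2)^2" using kk_le kk_pos by (intro power_mono) auto
  then have "4 * kk^2 \<le> 1" by (simp add: power2_eq_square)
  then have "4 * (1 - \<beta>) \<le> 1" using beta_kk by simp
  then show ?thesis by simp
qed

lemma beta_pos: "0 < \<beta>" using beta_ge by simp

lemma kk_GS: "kk * GS = \<epsilon> / 7" unfolding kk_def using GS_pos by simp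

lemma T_kk: "1 \<le> real T * kk^2"
proof -
  have "real T \<ge> 49 * GS^2 / \<epsilon>^2" using T_ge by (simp add: GS_def)
  moreover have "49 * GS^2 / \<epsilon>^2 = 1 / kk^2" unfolding kk_def using GS_pos eps_pos by (simp add: field_simps)
  ultimately have "1 / kk^2 \<le> real T" by simp
  then show ?thesis using kk_pos by (simp add: field_simps)
qed

lemma T_pos: "1 \<le> T"
proof -
  have "0 < real T * kk^2" using T_kk by linarith
  then have "0 < real T" using kk_pos by (simp add: zero_less_mult_iff)
  then show ?thesis by simp
qed

lemma mu_pos: "0 < mu" unfolding mu_def using lam_pos eps_pos by simp

definition "DD = sqrt \<epsilon> / (4 * sqrt lam)"

lemma DD_pos: "0 < DD" unfolding DD_def using lam_pos eps_pos by simp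

lemma mu_DD: "mu * DD = \<epsilon> / 2"
  unfolding mu_def DD_def using lam_pos eps_pos by (simp add: field_simps)

lemma mu_over_DD: "mu / (2 * DD) = 4 * lam"
  unfolding mu_def DD_def using lam_pos eps_pos by (simp add: field_simps)

lemma inv_DD: "1 / DD = 4 * sqrt lam / sqrt \<epsilon>"
  unfolding DD_def using lam_pos eps_pos by (simp add: field_simps)

abbreviation "Reg \<omega> t u \<equiv> regret_beta \<beta> (\<lambda>s. lin_quad_loss mu (gv \<omega> s)) (Dl \<omega>) t u"

lemma Reg0_eq: "Reg \<omega> t 0 = (\<Sum>s=1..t. \<beta>^(t-s) * (gv \<omega> s \<bullet> Dl \<omega> s + mu / 2 * (norm (Dl \<omega> s))^2))"
  unfolding regret_beta_def lin_quad_loss_def by simp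

lemma Reg0_int: "t \<in> {1..T} \<Longrightarrow> integrable (conv_space R Xi T) (\<lambda>\<omega>. Reg \<omega> t 0)"
  using learner_regret[of t "\<lambda>_. 0"] by simp

lemma g_sq_integrable:
  assumes t: "t \<in> {1..T}"
  shows "integrable (conv_space R Xi T) (\<lambda>\<omega>. (norm (gv \<omega> t))^2)"
proof (rule Bochner_Integration.integrable_bound)
  show "integrable (conv_space R Xi T) (\<lambda>\<omega>. 2 * (norm (zeta \<omega> t))^2 + 2 * G^2)"
    using zeta_sq_integrable[OF t] by auto
  show "(\<lambda>\<omega>. (norm (gv \<omega> t))^2) \<in> borel_measurable (conv_space R Xi T)"
    using g_meas[OF t] by measurable
  show "AE \<omega> in conv_space R Xi T. norm ((norm (gv \<omega> t))^2) \<le> norm (2 * (norm (zeta \<omega> t))^2 + 2 * G^2)"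
  proof (intro AE_I2)
    fix \<omega>
    have a: "norm (gv \<omega> t) \<le> norm (zeta \<omega> t) + G"
    proof -
      have "gv \<omega> t = zeta \<omega> t + gradF (yv \<omega> t)" unfolding zeta_def by simp
      then have "norm (gv \<omega> t) \<le> norm (zeta \<omega> t) + norm (gradF (yv \<omega> t))" by (metis norm_triangle_ineq)
      then show ?thesis using grad_bound[of "yv \<omega> t"] by linarith
    qed
    have "(norm (gv \<omega> t))^2 \<le> (norm (zeta \<omega> t) + G)^2" using a by (intro power_mono) auto
    also have "\<dots> \<le> 2 * (norm (zeta \<omega> t))^2 + 2 * G^2"
      using sum_squares_bound[of "norm (zeta \<omega> t)" G] by (simp add: power2_eq_square algebra_simps)
    finally show "norm ((norm (gv \<omega> t))^2) \<le> norm (2 * (norm (zeta \<omega> t))^2 + 2 * G^2)" by simp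
  qed
qed

lemma Delta_sq_integrable:
  assumes s: "s \<in> {1..T}"
  shows "integrable (conv_space R Xi T) (\<lambda>\<omega>. (norm (Dl \<omega> s))^2)"
proof -
  have T1: "T \<in> {1..T}" using T_pos by simp
  define q where "q \<omega> j = gv \<omega> j \<bullet> Dl \<omega> j + mu / 2 * (norm (Dl \<omega> j))^2 + (norm (gv \<omega> j))^2 / mu" for \<omega> j
  have qlow: "mu / 4 * (norm (Dl \<omega> j))^2 \<le> q \<omega> j" for \<omega> j
  proof -
    have "norm (gv \<omega> j) * norm (Dl \<omega> j) \<le> (norm (gv \<omega> j))^2 / mu + mu / 4 * (norm (Dl \<omega> j))^2"
      by (rule amgm_mu[OF mu_pos])
    moreover have "- (norm (gv \<omega> j) * norm (Dl \<omega> j)) \<le> gv \<omega> j \<bullet> Dl \<omega> j"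
      using Cauchy_Schwarz_ineq2[of "gv \<omega> j" "Dl \<omega> j"] by linarith
    ultimately show ?thesis unfolding q_def by linarith
  qed
  have qnn: "0 \<le> q \<omega> j" for \<omega> j
    using qlow[of \<omega> j] mu_pos by (meson order_trans mult_nonneg_nonneg zero_le_power2 less_imp_le divide_nonneg_pos zero_less_numeral)
  define tot where "tot \<omega> = (\<Sum>j=1..T. \<beta>^(T-j) * q \<omega> j)" for \<omega>
  have tot_eq: "tot \<omega> = Reg \<omega> T 0 + (\<Sum>j=1..T. \<beta>^(T-j) * ((norm (gv \<omega> j))^2 / mu))" for \<omega>
    unfolding tot_def Reg0_eq q_def by (simp add: algebra_simps sum.distrib)
  have tot_int: "integrable (conv_space R Xi T) tot"
    unfolding tot_eq using Reg0_int[OF T1] g_sq_integrable by (intro Bochner_Integration.integrable_add Bochner_Integration.integrable_sum) auto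
  show ?thesis
  proof (rule Bochner_Integration.integrable_bound)
    show "integrable (conv_space R Xi T) (\<lambda>\<omega>. 4 / (mu * \<beta>^(T-s)) * tot \<omega>)"
      using tot_int by auto
    show "(\<lambda>\<omega>. (norm (Dl \<omega> s))^2) \<in> borel_measurable (conv_space R Xi T)"
      using Delta_meas[OF s] by measurable
    show "AE \<omega> in conv_space R Xi T. norm ((norm (Dl \<omega> s))^2) \<le> norm (4 / (mu * \<beta>^(T-s)) * tot \<omega>)"
    proof (intro AE_I2)
      fix \<omega>
      have bp: "0 < \<beta>^(T-s)" using beta_pos by simp
      have "\<beta>^(T-s) * q \<omega> s \<le> tot \<omega>"
        unfolding tot_def using s qnn beta_pos
        by (intro member_le_sum) (auto intro!: mult_nonneg_nonneg)
      then have "q \<omega> s \<le> tot \<omega> / \<beta>^(T-s)" using bp by (simp add: field_simps)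
      have "(norm (Dl \<omega> s))^2 \<le> 4 / mu * q \<omega> s"
        using qlow[of \<omega> s] mu_pos by (simp add: field_simps)
      also have "\<dots> \<le> 4 / mu * (tot \<omega> / \<beta>^(T-s))"
        using \<open>q \<omega> s \<le> tot \<omega> / \<beta>^(T-s)\<close> mu_pos by (intro mult_left_mono) auto
      finally have "(norm (Dl \<omega> s))^2 \<le> 4 / mu * (tot \<omega> / \<beta>^(T-s))" .
      also have "\<dots> = 4 / (mu * \<beta>^(T-s)) * tot \<omega>" by simp
      finally have "(norm (Dl \<omega> s))^2 \<le> 4 / (mu * \<beta>^(T-s)) * tot \<omega>" .
      then show "norm ((norm (Dl \<omega> s))^2) \<le> norm (4 / (mu * \<beta>^(T-s)) * tot \<omega>)"
      proof -
        have "norm ((norm (Dl \<omega> s))^2) = (norm (Dl \<omega> s))^2" by simp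
        also have "\<dots> \<le> 4 / (mu * \<beta>^(T-s)) * tot \<omega>" by fact
        also have "\<dots> \<le> norm (4 / (mu * \<beta>^(T-s)) * tot \<omega>)" unfolding real_norm_def by (rule abs_ge_self)
        finally show ?thesis .
      qed
    qed
  qed
qed

lemma s_meas: "t \<in> {1..T} \<Longrightarrow> (\<lambda>\<omega>. fst (snd \<omega> t)) \<in> borel_measurable (conv_space R Xi T)"
  using measurable_comp[OF coord_meas[unfolded M0_def] measurable_fst]
  by (simp add: o_def cong: measurable_cong_sets)

lemma AE_unit1:
  assumes s: "s \<in> {1..T}"
  shows "AE \<omega> in conv_space R Xi T. 0 \<le> fst (snd \<omega> s) \<and> fst (snd \<omega> s) \<le> 1"
proof -
  interpret U: prob_space U01 by (rule prob_U01)
  define h where "h \<omega> = (if 0 \<le> fst (snd \<omega> s) \<and> fst (snd \<omega> s) \<le> 1 then 0 else (1::ennreal))" for \<omega> :: "'r \<times> (nat \<Rightarrow> real \<times> 'e)"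
  have hm: "h \<in> borel_measurable (conv_space R Xi T)"
    unfolding h_def using s_meas[OF s] by measurable
  have "(\<integral>\<^sup>+\<omega>. h \<omega> \<partial>conv_space R Xi T) \<le> 0"
    unfolding Om_eq
  proof (rule resample_nn_bound[OF R_prob prob_M0 finite_atLeastAtMost s])
    show "h \<in> borel_measurable (R \<Otimes>\<^sub>M PiM {1..T} (\<lambda>_. M0))" using hm unfolding Om_eq .
    fix \<rho> x
    have e: "h (\<rho>, x(s := z)) = (if 0 \<le> fst z \<and> fst z \<le> 1 then 0 else 1)" for z
      unfolding h_def by simp
    have m: "(\<lambda>z::real \<times> 'e. if 0 \<le> fst z \<and> fst z \<le> 1 then 0 else (1::ennreal)) \<in> borel_measurable (U01 \<Otimes>\<^sub>M Xi)"
      by measurable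
    have "(\<integral>\<^sup>+z. (if 0 \<le> fst z \<and> fst z \<le> 1 then 0 else (1::ennreal)) \<partial>M0)
        = (\<integral>\<^sup>+a. (\<integral>\<^sup>+\<xi>. (if 0 \<le> a \<and> a \<le> 1 then 0 else (1::ennreal)) \<partial>Xi) \<partial>U01)"
      unfolding M0_def using Xi.nn_integral_fst[OF m] by simp
    also have "\<dots> = (\<integral>\<^sup>+a. (if 0 \<le> a \<and> a \<le> 1 then 0 else (1::ennreal)) \<partial>U01)"
      by (intro nn_integral_cong) (simp add: Xi.emeasure_space_1)
    also have "\<dots> = 0"
    proof (subst nn_integral_0_iff_AE)
      show "(\<lambda>a. if 0 \<le> a \<and> a \<le> 1 then 0 else (1::ennreal)) \<in> borel_measurable U01" by measurable
      show "AE a in U01. (if 0 \<le> a \<and> a \<le> 1 then 0 else (1::ennreal)) = 0"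
        using AE_U01 by eventually_elim auto
    qed
    finally show "(\<integral>\<^sup>+z. h (\<rho>, x(s := z)) \<partial>M0) \<le> 0" unfolding e by simp
  qed
  then have "(\<integral>\<^sup>+\<omega>. h \<omega> \<partial>conv_space R Xi T) = 0" by simp
  then have "AE \<omega> in conv_space R Xi T. h \<omega> = 0" using hm by (simp add: nn_integral_0_iff_AE)
  then show ?thesis by eventually_elim (auto simp: h_def split: if_splits)
qed

lemma AE_unit: "AE \<omega> in conv_space R Xi T. \<forall>s\<in>{1..T}. 0 \<le> fst (snd \<omega> s) \<and> fst (snd \<omega> s) \<le> 1"
  using AE_unit1 by (subst AE_finite_all) auto

definition "Bt t = Sb \<beta> (\<lambda>_. 1) t"
definition "V \<omega> t = (\<Sum>s=1..t. \<beta>^(t-s) *\<^sub>R gv \<omega> s)"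
definition "Nn \<omega> t = (\<Sum>s=1..t. \<beta>^(t-s) *\<^sub>R zeta \<omega> s)"
definition "uu \<omega> t = (- DD / norm (V \<omega> t)) *\<^sub>R V \<omega> t"
definition "aa = GS / kk"
definition "H \<omega> t = (1 / Bt t) * ((Reg \<omega> t (uu \<omega> t) - Reg \<omega> t 0) / DD + mu / 2 * DD * Bt t + aa / 2
     + (norm (Nn \<omega> t))^2 / (2 * aa)) + lam / Bt t * (\<Sum>s=1..t. \<beta>^(t-s) * (norm (Dl \<omega> s))^2)"

lemma aa_pos: "0 < aa" unfolding aa_def using GS_pos kk_pos by simp

lemma Bt_ge1: "1 \<le> t \<Longrightarrow> 1 \<le> Bt t"
  unfolding Bt_def using beta_pos by (intro Sb_one_ge1) auto

lemma Bt_sum: "Bt t = (\<Sum>s=1..t. \<beta>^(t-s))" unfolding Bt_def Sb_def by simp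

lemma Reg_diff: "Reg \<omega> t u - Reg \<omega> t 0 = - (V \<omega> t \<bullet> u) - mu / 2 * (norm u)^2 * Bt t"
proof -
  have "Reg \<omega> t u - Reg \<omega> t 0 = (\<Sum>s=1..t. \<beta>^(t-s) * (- (gv \<omega> s \<bullet> u) - mu / 2 * (norm u)^2))"
    unfolding regret_beta_def lin_quad_loss_def by (simp add: sum_subtractf[symmetric] algebra_simps)
  also have "\<dots> = - (\<Sum>s=1..t. \<beta>^(t-s) * (gv \<omega> s \<bullet> u)) - mu / 2 * (norm u)^2 * (\<Sum>s=1..t. \<beta>^(t-s))"
    by (simp add: algebra_simps sum_subtractf sum_distrib_left sum_distrib_right sum_negf)
  also have "(\<Sum>s=1..t. \<beta>^(t-s) * (gv \<omega> s \<bullet> u)) = V \<omega> t \<bullet> u"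
    unfolding V_def by (simp add: inner_sum_left)
  finally show ?thesis by (simp add: Bt_sum)
qed

lemma uu_norm: "norm (uu \<omega> t) \<le> DD"
  unfolding uu_def using DD_pos by (cases "V \<omega> t = 0") auto

lemma V_bound:
  assumes t: "1 \<le> t"
  shows "norm (V \<omega> t) \<le> (Reg \<omega> t (uu \<omega> t) - Reg \<omega> t 0) / DD + mu / 2 * DD * Bt t"
proof (cases "V \<omega> t = 0")
  case True
  have "0 \<le> mu / 2 * DD * Bt t" using mu_pos DD_pos Bt_ge1[OF t] by simp
  then show ?thesis using True by (simp add: uu_def Reg_diff)
next
  case False
  have n: "norm (V \<omega> t) \<noteq> 0" using False by simp
  have i: "V \<omega> t \<bullet> uu \<omega> t = - DD * norm (V \<omega> t)"
    unfolding uu_def using n by (simp add: power2_norm_eq_inner[symmetric] power2_eq_square)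
  have nu: "norm (uu \<omega> t) = DD" unfolding uu_def using n DD_pos by simp
  have "Reg \<omega> t (uu \<omega> t) - Reg \<omega> t 0 = DD * norm (V \<omega> t) - mu / 2 * DD^2 * Bt t"
    unfolding Reg_diff i nu by simp
  then have "(Reg \<omega> t (uu \<omega> t) - Reg \<omega> t 0) / DD + mu / 2 * DD * Bt t = norm (V \<omega> t)"
    using DD_pos by (simp add: field_simps power2_eq_square)
  then show ?thesis by simp
qed

lemma exp_avg_eq:
  assumes t: "1 \<le> t"
  shows "exp_avg \<beta> y t = (\<Sum>s=1..t. (\<beta>^(t-s) / Bt t) *\<^sub>R y s)"
proof -
  have bt: "Bt t = (1 - \<beta>^t) / (1 - \<beta>)" unfolding Bt_def using beta_lt1 by (simp add: Sb_one_geom)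
  have "\<beta>^t < 1" using beta_lt1 beta_pos t by (simp add: power_less_one_iff)
  then have ne: "1 - \<beta>^t \<noteq> 0" by simp
  have "(1 - \<beta>) / (1 - \<beta>^t) = 1 / Bt t" unfolding bt using ne beta_lt1 by simp
  then show ?thesis unfolding exp_avg_def by (simp add: scaleR_sum_right)
qed

lemma amgm_aa: "x \<le> aa / 2 + x^2 / (2 * aa)"
proof -
  have "0 \<le> (x - aa)^2" by simp
  then have "x * (2 * aa) \<le> aa^2 + x^2" by (simp add: power2_eq_square algebra_simps)
  then have "x \<le> (aa^2 + x^2) / (2 * aa)" using aa_pos by (simp add: pos_le_divide_eq)
  also have "(aa^2 + x^2) / (2 * aa) = aa / 2 + x^2 / (2 * aa)" using aa_pos by (simp add: field_simps power2_eq_square)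
  finally show ?thesis .
qed

lemma pointwise_bound:
  assumes t: "t \<in> {1..T}" and unit: "\<forall>s\<in>{1..T}. 0 \<le> fst (snd \<omega> s) \<and> fst (snd \<omega> s) \<le> 1"
  shows "lambda_norm gradF lam (exp_avg \<beta> (yv \<omega>) t) \<le> H \<omega> t"
    and "0 \<le> lambda_norm gradF lam (exp_avg \<beta> (yv \<omega>) t)"
proof -
  have t1: "1 \<le> t" using t by simp
  have B1: "1 \<le> Bt t" by (rule Bt_ge1[OF t1])
  define wt where "wt s = \<beta>^(t-s) / Bt t" for s
  have wn: "0 \<le> wt s" for s unfolding wt_def using beta_pos B1 by simp
  have w1: "(\<Sum>s=1..t. wt s) = 1"
  proof -
    have "(\<Sum>s=1..t. wt s) = (\<Sum>s=1..t. \<beta>^(t-s)) / Bt t" unfolding wt_def by (simp add: sum_divide_distrib)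
    also have "\<dots> = Bt t / Bt t" by (simp only: Bt_sum)
    finally show ?thesis using B1 by simp
  qed
  have ea: "exp_avg \<beta> (yv \<omega>) t = (\<Sum>s=1..t. wt s *\<^sub>R yv \<omega> s)" unfolding wt_def by (rule exp_avg_eq[OF t1])
  note LN = lambda_norm_le[OF gradF_meas finite_atLeastAtMost wn w1 less_imp_le[OF lam_pos], of "yv \<omega>"]
  show "0 \<le> lambda_norm gradF lam (exp_avg \<beta> (yv \<omega>) t)" unfolding ea by (rule LN(2))
  have var: "(\<Sum>s=1..t. wt s * (norm (yv \<omega> s - (\<Sum>s=1..t. wt s *\<^sub>R yv \<omega> s)))^2)
      \<le> (\<Sum>s=1..t. wt s * (norm (Dl \<omega> s))^2)"
  proof -
    have "(\<Sum>s=1..t. wt s * (norm (yv \<omega> s - (\<Sum>s=1..t. wt s *\<^sub>R yv \<omega> s)))^2) \<le> (\<Sum>s=1..t. wt s * (norm (yv \<omega> s - x0))^2)"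
      by (rule variance_le_second_moment[OF finite_atLeastAtMost wn w1])
    also have "\<dots> \<le> (\<Sum>s=1..t. wt s * (norm (Dl \<omega> s))^2)"
    proof (intro sum_mono mult_left_mono wn)
      fix s assume s: "s \<in> {1..t}"
      then have "s \<in> {1..T}" using t by auto
      then have u: "\<bar>fst (snd \<omega> s)\<bar> \<le> 1" using unit by auto
      have "norm (yv \<omega> s - x0) = \<bar>fst (snd \<omega> s)\<bar> * norm (Dl \<omega> s)" unfolding conv_y_def by simp
      also have "\<dots> \<le> norm (Dl \<omega> s)" using u by (simp add: mult_left_le_one_le)
      finally show "(norm (yv \<omega> s - x0))^2 \<le> (norm (Dl \<omega> s))^2" by (intro power_mono) auto
    qed
    finally show ?thesis .
  qed
  have gsum: "(\<Sum>s=1..t. wt s *\<^sub>R gradF (yv \<omega> s)) = (1 / Bt t) *\<^sub>R (V \<omega> t - Nn \<omega> t)"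
  proof -
    have "V \<omega> t - Nn \<omega> t = (\<Sum>s=1..t. \<beta>^(t-s) *\<^sub>R gradF (yv \<omega> s))"
      unfolding V_def Nn_def zeta_def by (simp add: sum_subtractf[symmetric] scaleR_diff_right)
    then show ?thesis unfolding wt_def by (simp add: scaleR_sum_right)
  qed
  have "norm (\<Sum>s=1..t. wt s *\<^sub>R gradF (yv \<omega> s)) \<le> (norm (V \<omega> t) + norm (Nn \<omega> t)) / Bt t"
    unfolding gsum using B1 norm_triangle_ineq4[of "V \<omega> t" "Nn \<omega> t"] by (simp add: divide_right_mono)
  also have "\<dots> \<le> ((Reg \<omega> t (uu \<omega> t) - Reg \<omega> t 0) / DD + mu / 2 * DD * Bt t + aa / 2 + (norm (Nn \<omega> t))^2 / (2 * aa)) / Bt t"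
    using V_bound[OF t1, of \<omega>] amgm_aa[of "norm (Nn \<omega> t)"] B1 by (intro divide_right_mono) auto
  finally have p1: "norm (\<Sum>s=1..t. wt s *\<^sub>R gradF (yv \<omega> s)) \<le> ((Reg \<omega> t (uu \<omega> t) - Reg \<omega> t 0) / DD + mu / 2 * DD * Bt t + aa / 2 + (norm (Nn \<omega> t))^2 / (2 * aa)) / Bt t" .
  have p2: "(\<Sum>s=1..t. wt s * (norm (Dl \<omega> s))^2) = (\<Sum>s=1..t. \<beta>^(t-s) * (norm (Dl \<omega> s))^2) / Bt t"
    unfolding wt_def by (simp add: sum_divide_distrib[symmetric])
  have "lambda_norm gradF lam (exp_avg \<beta> (yv \<omega>) t) \<le> norm (\<Sum>s=1..t. wt s *\<^sub>R gradF (yv \<omega> s)) + lam * (\<Sum>s=1..t. wt s * (norm (yv \<omega> s - (\<Sum>s=1..t. wt s *\<^sub>R yv \<omega> s)))^2)"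
    unfolding ea by (rule LN(1))
  also have "\<dots> \<le> norm (\<Sum>s=1..t. wt s *\<^sub>R gradF (yv \<omega> s)) + lam * (\<Sum>s=1..t. wt s * (norm (Dl \<omega> s))^2)"
    using var lam_pos by (intro add_left_mono mult_left_mono) auto
  also have "\<dots> \<le> H \<omega> t"
  proof -
    have r: "\<And>b X l S::real. (1 / b) * X + l / b * S = X / b + l * (S / b)" by simp
    show ?thesis unfolding H_def r p2 using p1 by simp
  qed
  finally show "lambda_norm gradF lam (exp_avg \<beta> (yv \<omega>) t) \<le> H \<omega> t" .
qed

lemma (in prob_space) integral_le_const_any:
  assumes "\<And>x. x \<in> space M \<Longrightarrow> f x \<le> c" "0 \<le> c"
  shows "(\<integral>x. f x \<partial>M) \<le> (c::real)"
proof (cases "integrable M f")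
  case True
  then have "(\<integral>x. f x \<partial>M) \<le> (\<integral>x. c \<partial>M)" using assms by (intro integral_mono) auto
  then show ?thesis by (simp add: prob_space)
next
  case False then show ?thesis using assms by (simp add: not_integrable_integral_eq)
qed

lemma V_meas: "t \<in> {1..T} \<Longrightarrow> (\<lambda>\<omega>. V \<omega> t) \<in> borel_measurable (conv_space R Xi T)"
  unfolding V_def by (intro borel_measurable_sum borel_measurable_scaleR g_meas) auto

lemma uu_meas: "t \<in> {1..T} \<Longrightarrow> (\<lambda>\<omega>. uu \<omega> t) \<in> borel_measurable (conv_space R Xi T)"
  unfolding uu_def using V_meas by measurable

lemma uu_sq_int: "t \<in> {1..T} \<Longrightarrow> integrable (conv_space R Xi T) (\<lambda>\<omega>. (norm (uu \<omega> t))^2)"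
  using uu_meas uu_norm DD_pos
  by (intro Om.integrable_const_bound[where B="DD^2"]) (auto intro!: power_mono)

definition "K1 = 2 * DD * GS / (\<beta> * kk) + mu / 2 * DD^2"

lemma Reg_uu:
  assumes t: "t \<in> {1..T}"
  shows "integrable (conv_space R Xi T) (\<lambda>\<omega>. Reg \<omega> t (uu \<omega> t))"
    "(\<integral>\<omega>. Reg \<omega> t (uu \<omega> t) \<partial>conv_space R Xi T) \<le> K1"
proof -
  note L = learner_regret[OF t uu_meas[OF t] uu_sq_int[OF t]]
  show "integrable (conv_space R Xi T) (\<lambda>\<omega>. Reg \<omega> t (uu \<omega> t))" using L by simp
  have "(\<integral>\<omega>. 2 * norm (uu \<omega> t) * (G + \<sigma>) / (\<beta> * sqrt (1 - \<beta>)) + mu / 2 * (norm (uu \<omega> t))^2 \<partial>conv_space R Xi T) \<le> K1"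
  proof (rule Om.integral_le_const_any)
    fix \<omega>
    have n: "norm (uu \<omega> t) \<le> DD" by (rule uu_norm)
    have b: "0 < \<beta> * kk" using beta_pos kk_pos by simp
    have "2 * norm (uu \<omega> t) * GS / (\<beta> * kk) \<le> 2 * DD * GS / (\<beta> * kk)"
      using n GS_pos b by (intro divide_right_mono mult_right_mono) auto
    moreover have "mu / 2 * (norm (uu \<omega> t))^2 \<le> mu / 2 * DD^2"
      using n mu_pos by (intro mult_left_mono power_mono) auto
    ultimately show "2 * norm (uu \<omega> t) * (G + \<sigma>) / (\<beta> * sqrt (1 - \<beta>)) + mu / 2 * (norm (uu \<omega> t))^2 \<le> K1"
      unfolding K1_def sqrt_1_beta GS_def[symmetric] by linarith
  next
    show "0 \<le> K1" unfolding K1_def using DD_pos GS_pos beta_pos kk_pos mu_pos by simp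
  qed
  then show "(\<integral>\<omega>. Reg \<omega> t (uu \<omega> t) \<partial>conv_space R Xi T) \<le> K1" using L by linarith
qed

definition "ee s = (\<integral>\<omega>. F (wv \<omega> s) - F x0 \<partial>conv_space R Xi T)"
definition "dd s = (\<integral>\<omega>. (norm (Dl \<omega> s))^2 \<partial>conv_space R Xi T)"

lemma dd_nonneg: "0 \<le> dd s" unfolding dd_def by simp

lemma Reg0_integral:
  assumes t: "t \<in> {1..T}"
  shows "(\<integral>\<omega>. Reg \<omega> t 0 \<partial>conv_space R Xi T) = (\<Sum>s=1..t. \<beta>^(t-s) * (ee s + mu / 2 * dd s))"
proof -
  have sT: "s \<in> {1..T}" if "s \<in> {1..t}" for s using that t by auto
  have i1: "integrable (conv_space R Xi T) (\<lambda>\<omega>. gv \<omega> s \<bullet> Dl \<omega> s)" if "s \<in> {1..t}" for s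
    using g_Delta_integrable[OF sT[OF that] Delta_sq_integrable[OF sT[OF that]]] .
  have i2: "integrable (conv_space R Xi T) (\<lambda>\<omega>. (norm (Dl \<omega> s))^2)" if "s \<in> {1..t}" for s
    using Delta_sq_integrable[OF sT[OF that]] .
  have "(\<integral>\<omega>. Reg \<omega> t 0 \<partial>conv_space R Xi T) = (\<Sum>s=1..t. (\<integral>\<omega>. \<beta>^(t-s) * (gv \<omega> s \<bullet> Dl \<omega> s + mu / 2 * (norm (Dl \<omega> s))^2) \<partial>conv_space R Xi T))"
    unfolding Reg0_eq using i1 i2 by (intro Bochner_Integration.integral_sum) auto
  also have "\<dots> = (\<Sum>s=1..t. \<beta>^(t-s) * (ee s + mu / 2 * dd s))"
  proof (intro sum.cong refl)
    fix s assume s: "s \<in> {1..t}"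
    have "(\<integral>\<omega>. \<beta>^(t-s) * (gv \<omega> s \<bullet> Dl \<omega> s + mu / 2 * (norm (Dl \<omega> s))^2) \<partial>conv_space R Xi T)
        = \<beta>^(t-s) * ((\<integral>\<omega>. gv \<omega> s \<bullet> Dl \<omega> s \<partial>conv_space R Xi T) + mu / 2 * dd s)"
      unfolding dd_def using i1[OF s] i2[OF s] by simp
    also have "(\<integral>\<omega>. gv \<omega> s \<bullet> Dl \<omega> s \<partial>conv_space R Xi T) = ee s"
      unfolding ee_def by (rule g_Delta_eq[OF sT[OF s] i2[OF s]])
    finally show "(\<integral>\<omega>. \<beta>^(t-s) * (gv \<omega> s \<bullet> Dl \<omega> s + mu / 2 * (norm (Dl \<omega> s))^2) \<partial>conv_space R Xi T) = \<beta>^(t-s) * (ee s + mu / 2 * dd s)" .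
  qed
  finally show ?thesis .
qed

lemma Nn_sq:
  assumes t: "t \<in> {1..T}"
  shows "integrable (conv_space R Xi T) (\<lambda>\<omega>. (norm (Nn \<omega> t))^2)"
    "(\<integral>\<omega>. (norm (Nn \<omega> t))^2 \<partial>conv_space R Xi T) \<le> \<sigma>^2 / kk^2"
proof -
  have S: "{1..t} \<subseteq> {1..T}" using t by auto
  note NS = noise_sum_sq[OF S, of "\<lambda>s. \<beta>^(t-s)"]
  show "integrable (conv_space R Xi T) (\<lambda>\<omega>. (norm (Nn \<omega> t))^2)" unfolding Nn_def using NS(1) .
  have "(\<integral>\<omega>. (norm (Nn \<omega> t))^2 \<partial>conv_space R Xi T) \<le> \<sigma>^2 * (\<Sum>s=1..t. (\<beta>^(t-s))^2)"
    unfolding Nn_def using NS(2) .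
  also have "\<dots> \<le> \<sigma>^2 * (1 / (1 - \<beta>))"
    using sq_geom_le[OF less_imp_le[OF beta_pos] beta_lt1] by (intro mult_left_mono) auto
  finally show "(\<integral>\<omega>. (norm (Nn \<omega> t))^2 \<partial>conv_space R Xi T) \<le> \<sigma>^2 / kk^2" by (simp add: beta_kk)
qed

definition "Q t = (K1 - (\<Sum>s=1..t. \<beta>^(t-s) * (ee s + mu / 2 * dd s))) / DD + mu / 2 * DD * Bt t + aa / 2
    + \<sigma>^2 / kk^2 / (2 * aa) + lam * (\<Sum>s=1..t. \<beta>^(t-s) * dd s)"

lemma H_int:
  assumes t: "t \<in> {1..T}"
  shows "integrable (conv_space R Xi T) (\<lambda>\<omega>. H \<omega> t)"
    "(\<integral>\<omega>. H \<omega> t \<partial>conv_space R Xi T) \<le> Q t / Bt t"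
proof -
  have sT: "s \<in> {1..T}" if "s \<in> {1..t}" for s using that t by auto
  have iR: "integrable (conv_space R Xi T) (\<lambda>\<omega>. Reg \<omega> t (uu \<omega> t))" by (rule Reg_uu(1)[OF t])
  have iR0: "integrable (conv_space R Xi T) (\<lambda>\<omega>. Reg \<omega> t 0)" by (rule Reg0_int[OF t])
  have iN: "integrable (conv_space R Xi T) (\<lambda>\<omega>. (norm (Nn \<omega> t))^2)" by (rule Nn_sq(1)[OF t])
  have iDs: "integrable (conv_space R Xi T) (\<lambda>\<omega>. \<beta>^(t-s) * (norm (Dl \<omega> s))^2)" if "s \<in> {1..t}" for s
    using Delta_sq_integrable[OF sT[OF that]] by simp
  have iD: "integrable (conv_space R Xi T) (\<lambda>\<omega>. \<Sum>s=1..t. \<beta>^(t-s) * (norm (Dl \<omega> s))^2)"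
    using iDs by (intro Bochner_Integration.integrable_sum) auto
  have intD: "(\<integral>\<omega>. (\<Sum>s=1..t. \<beta>^(t-s) * (norm (Dl \<omega> s))^2) \<partial>conv_space R Xi T) = (\<Sum>s=1..t. \<beta>^(t-s) * dd s)"
  proof -
    have "(\<integral>\<omega>. (\<Sum>s=1..t. \<beta>^(t-s) * (norm (Dl \<omega> s))^2) \<partial>conv_space R Xi T) = (\<Sum>s=1..t. (\<integral>\<omega>. \<beta>^(t-s) * (norm (Dl \<omega> s))^2 \<partial>conv_space R Xi T))"
      using iDs by (intro Bochner_Integration.integral_sum) auto
    also have "\<dots> = (\<Sum>s=1..t. \<beta>^(t-s) * dd s)" unfolding dd_def by simp
    finally show ?thesis .
  qed
  define X where "X \<omega> = (Reg \<omega> t (uu \<omega> t) - Reg \<omega> t 0) / DD + mu / 2 * DD * Bt t + aa / 2 + (norm (Nn \<omega> t))^2 / (2 * aa)" for \<omega>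
  have iX: "integrable (conv_space R Xi T) X"
    unfolding X_def using iR iR0 iN by auto
  have intX: "(\<integral>\<omega>. X \<omega> \<partial>conv_space R Xi T) = ((\<integral>\<omega>. Reg \<omega> t (uu \<omega> t) \<partial>conv_space R Xi T) - (\<integral>\<omega>. Reg \<omega> t 0 \<partial>conv_space R Xi T)) / DD
      + mu / 2 * DD * Bt t + aa / 2 + (\<integral>\<omega>. (norm (Nn \<omega> t))^2 \<partial>conv_space R Xi T) / (2 * aa)"
    unfolding X_def using iR iR0 iN by (simp add: Om.prob_space)
  have Hx: "H \<omega> t = (1 / Bt t) * X \<omega> + lam / Bt t * (\<Sum>s=1..t. \<beta>^(t-s) * (norm (Dl \<omega> s))^2)" for \<omega>
    unfolding H_def X_def ..
  show "integrable (conv_space R Xi T) (\<lambda>\<omega>. H \<omega> t)" unfolding Hx using iX iD by auto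
  have intH: "(\<integral>\<omega>. H \<omega> t \<partial>conv_space R Xi T) = (1 / Bt t) * (\<integral>\<omega>. X \<omega> \<partial>conv_space R Xi T) + lam / Bt t * (\<Sum>s=1..t. \<beta>^(t-s) * dd s)"
    unfolding Hx using iX iD intD by simp
  have B1: "1 \<le> Bt t" using Bt_ge1 t by auto
  have "(\<integral>\<omega>. X \<omega> \<partial>conv_space R Xi T) \<le> (K1 - (\<Sum>s=1..t. \<beta>^(t-s) * (ee s + mu / 2 * dd s))) / DD + mu / 2 * DD * Bt t + aa / 2
      + \<sigma>^2 / kk^2 / (2 * aa)"
  proof -
    have a: "((\<integral>\<omega>. Reg \<omega> t (uu \<omega> t) \<partial>conv_space R Xi T) - (\<integral>\<omega>. Reg \<omega> t 0 \<partial>conv_space R Xi T)) / DD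
        \<le> (K1 - (\<Sum>s=1..t. \<beta>^(t-s) * (ee s + mu / 2 * dd s))) / DD"
      using Reg_uu(2)[OF t] Reg0_integral[OF t] DD_pos by (intro divide_right_mono) auto
    have b: "(\<integral>\<omega>. (norm (Nn \<omega> t))^2 \<partial>conv_space R Xi T) / (2 * aa) \<le> \<sigma>^2 / kk^2 / (2 * aa)"
      using Nn_sq(2)[OF t] aa_pos by (intro divide_right_mono) auto
    show ?thesis unfolding intX using a b by linarith
  qed
  then have "(\<integral>\<omega>. H \<omega> t \<partial>conv_space R Xi T) \<le> (1 / Bt t) * ((K1 - (\<Sum>s=1..t. \<beta>^(t-s) * (ee s + mu / 2 * dd s))) / DD + mu / 2 * DD * Bt t + aa / 2
      + \<sigma>^2 / kk^2 / (2 * aa)) + lam / Bt t * (\<Sum>s=1..t. \<beta>^(t-s) * dd s)"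
    unfolding intH using B1 by (intro add_right_mono mult_left_mono) auto
  also have "\<dots> = Q t / Bt t" unfolding Q_def by (simp add: add_divide_distrib)
  finally show "(\<integral>\<omega>. H \<omega> t \<partial>conv_space R Xi T) \<le> Q t / Bt t" .
qed

lemma lambda_norm_integral:
  assumes t: "t \<in> {1..T}"
  shows "(\<integral>\<omega>. lambda_norm gradF lam (exp_avg \<beta> (yv \<omega>) t) \<partial>conv_space R Xi T) \<le> Q t / Bt t"
proof -
  have AE1: "AE \<omega> in conv_space R Xi T. lambda_norm gradF lam (exp_avg \<beta> (yv \<omega>) t) \<le> H \<omega> t
      \<and> 0 \<le> lambda_norm gradF lam (exp_avg \<beta> (yv \<omega>) t)"
    using AE_unit by eventually_elim (use pointwise_bound[OF t] in auto)
  have "(\<integral>\<omega>. lambda_norm gradF lam (exp_avg \<beta> (yv \<omega>) t) \<partial>conv_space R Xi T) \<le> (\<integral>\<omega>. H \<omega> t \<partial>conv_space R Xi T)"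
  proof (cases "integrable (conv_space R Xi T) (\<lambda>\<omega>. lambda_norm gradF lam (exp_avg \<beta> (yv \<omega>) t))")
    case True
    then show ?thesis using AE1 H_int(1)[OF t] by (intro integral_mono_AE) auto
  next
    case False
    have "0 \<le> (\<integral>\<omega>. H \<omega> t \<partial>conv_space R Xi T)"
      using AE1 by (intro integral_nonneg_AE) (auto elim: eventually_mono)
    then show ?thesis using False by (simp add: not_integrable_integral_eq)
  qed
  also have "\<dots> \<le> Q t / Bt t" by (rule H_int(2)[OF t])
  finally show ?thesis .
qed

definition "K2 = K1 / DD + aa / 2 + \<sigma>^2 / kk^2 / (2 * aa)"

lemma Q_eq: "Q t = K2 + (mu / 2 * DD) * Sb \<beta> (\<lambda>_. 1) t + Sb \<beta> (\<lambda>s. lam * dd s - (ee s + mu / 2 * dd s) / DD) t"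
proof -
  have "Sb \<beta> (\<lambda>s. lam * dd s - (ee s + mu / 2 * dd s) / DD) t
      = lam * (\<Sum>s=1..t. \<beta>^(t-s) * dd s) - (\<Sum>s=1..t. \<beta>^(t-s) * (ee s + mu / 2 * dd s)) / DD"
    unfolding Sb_def by (simp add: right_diff_distrib sum_subtractf sum_distrib_left sum_divide_distrib mult.left_commute)
  then show ?thesis unfolding Q_def K2_def Bt_def by (simp add: diff_divide_distrib algebra_simps)
qed

lemma K2_le: "K2 \<le> 2 * GS / (\<beta> * kk) + \<epsilon> / 4 + GS / kk"
proof -
  have k1: "K1 / DD = 2 * GS / (\<beta> * kk) + \<epsilon> / 4"
    unfolding K1_def using DD_pos mu_DD by (simp add: field_simps power2_eq_square)
  have sG: "\<sigma> \<le> GS" unfolding GS_def using G_nonneg by simp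
  have s2: "\<sigma>^2 \<le> GS^2" using sG sigma_nonneg by (intro power_mono) auto
  have "\<sigma>^2 / kk^2 / (2 * aa) = \<sigma>^2 / (2 * kk * GS)"
    unfolding aa_def using kk_pos GS_pos by (simp add: field_simps power2_eq_square)
  also have "\<dots> \<le> GS^2 / (2 * kk * GS)" using s2 kk_pos GS_pos by (intro divide_right_mono) auto
  also have "\<dots> = GS / (2 * kk)" using GS_pos by (simp add: power2_eq_square)
  finally have n: "\<sigma>^2 / kk^2 / (2 * aa) \<le> GS / (2 * kk)" .
  have a: "aa / 2 = GS / (2 * kk)" unfolding aa_def by simp
  have "GS / (2 * kk) + GS / (2 * kk) = GS / kk" by simp
  then show ?thesis unfolding K2_def k1 a using n by linarith
qed

lemma K2_nonneg: "0 \<le> K2"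
  unfolding K2_def K1_def using DD_pos aa_pos kk_pos GS_pos beta_pos mu_pos by simp

lemma numeric: "K2 * (\<Sum>t=1..T. cw \<beta> T t) / real T + mu * DD / 2 \<le> 3 * \<epsilon>"
proof -
  have Tp: "0 < real T" using T_pos by simp
  have cws: "(\<Sum>t=1..T. cw \<beta> T t) \<le> 2 * real T * kk^2"
    using cw_sum_le[OF T_pos less_imp_le[OF beta_lt1]] T_kk unfolding beta_kk by linarith
  have "K2 * (\<Sum>t=1..T. cw \<beta> T t) / real T \<le> K2 * (2 * real T * kk^2) / real T"
    using cws K2_nonneg Tp by (intro divide_right_mono mult_left_mono) auto
  also have "\<dots> = 2 * kk^2 * K2" using Tp by simp
  also have "\<dots> \<le> 2 * kk^2 * (2 * GS / (\<beta> * kk) + \<epsilon> / 4 + GS / kk)"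
    using K2_le by (intro mult_left_mono) auto
  also have "\<dots> = 4 * (kk * GS) / \<beta> + kk^2 * \<epsilon> / 2 + 2 * (kk * GS)"
    using kk_pos beta_pos by (simp add: field_simps power2_eq_square)
  also have "\<dots> = 4 * (\<epsilon> / 7) / \<beta> + kk^2 * \<epsilon> / 2 + 2 * (\<epsilon> / 7)" unfolding kk_GS ..
  finally have A: "K2 * (\<Sum>t=1..T. cw \<beta> T t) / real T \<le> 4 * (\<epsilon> / 7) / \<beta> + kk^2 * \<epsilon> / 2 + 2 * (\<epsilon> / 7)" .
  have b1: "4 * (\<epsilon> / 7) / \<beta> \<le> 4 * (\<epsilon> / 7) / (3/4)"
    using beta_ge eps_pos by (intro divide_left_mono) auto
  have kk2: "kk^2 \<le> 1/4"
  proof -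
    have "kk^2 \<le> (1/2)^2" using kk_le kk_pos by (intro power_mono) auto
    then show ?thesis by (simp add: power2_eq_square)
  qed
  have b2: "kk^2 * \<epsilon> / 2 \<le> (1/4) * \<epsilon> / 2"
    using kk2 eps_pos by (intro divide_right_mono mult_right_mono) auto
  have m: "mu * DD / 2 = \<epsilon> / 4" using mu_DD by simp
  have "4 * (\<epsilon> / 7) / (3/4) + (1/4) * \<epsilon> / 2 + 2 * (\<epsilon> / 7) + \<epsilon> / 4 \<le> 3 * \<epsilon>"
    using eps_pos by simp
  then show ?thesis using A b1 b2 m by linarith
qed

lemma main_bound:
  "(\<Sum>t=1..T. tau_prob \<beta> T t *
      (\<integral>\<omega>. lambda_norm gradF lam (exp_avg \<beta> (yv \<omega>) t) \<partial>conv_space R Xi T))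
   \<le> 3 * \<epsilon> + 4 * sqrt lam / sqrt \<epsilon> / real T *
      (\<integral>\<omega>. (\<Sum>t=1..T. F x0 - F (wv \<omega> t)) \<partial>conv_space R Xi T)"
proof -
  have Tp: "0 < real T" using T_pos by simp
  have step1: "(\<Sum>t=1..T. tau_prob \<beta> T t * (\<integral>\<omega>. lambda_norm gradF lam (exp_avg \<beta> (yv \<omega>) t) \<partial>conv_space R Xi T))
      \<le> (\<Sum>t=1..T. cw \<beta> T t * Q t / real T)"
  proof (intro sum_mono)
    fix t assume t: "t \<in> {1..T}"
    have B1: "1 \<le> Bt t" using Bt_ge1 t by auto
    have tp: "tau_prob \<beta> T t = cw \<beta> T t * Bt t / real T"
      unfolding Bt_def by (rule tau_prob_eq[OF less_imp_le[OF beta_pos] beta_lt1 t])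
    have cwn: "0 \<le> cw \<beta> T t" unfolding cw_def using beta_lt1 by simp
    have "tau_prob \<beta> T t * (\<integral>\<omega>. lambda_norm gradF lam (exp_avg \<beta> (yv \<omega>) t) \<partial>conv_space R Xi T)
        \<le> tau_prob \<beta> T t * (Q t / Bt t)"
      using lambda_norm_integral[OF t] cwn B1 Tp unfolding tp by (intro mult_left_mono) auto
    also have "\<dots> = cw \<beta> T t * Q t / real T" unfolding tp using B1 by simp
    finally show "tau_prob \<beta> T t * (\<integral>\<omega>. lambda_norm gradF lam (exp_avg \<beta> (yv \<omega>) t) \<partial>conv_space R Xi T)
        \<le> cw \<beta> T t * Q t / real T" .
  qed
  define f where "f s = lam * dd s - (ee s + mu / 2 * dd s) / DD" for s
  have sumQ: "(\<Sum>t=1..T. cw \<beta> T t * Q t) = K2 * (\<Sum>t=1..T. cw \<beta> T t) + (mu / 2 * DD) * real T + (\<Sum>s=1..T. f s)"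
  proof -
    have "(\<Sum>t=1..T. cw \<beta> T t * Q t) = K2 * (\<Sum>t=1..T. cw \<beta> T t) + (mu / 2 * DD) * (\<Sum>t=1..T. cw \<beta> T t * Sb \<beta> (\<lambda>_. 1) t)
        + (\<Sum>t=1..T. cw \<beta> T t * Sb \<beta> f t)"
      unfolding Q_eq f_def by (simp add: algebra_simps sum.distrib sum_distrib_left)
    also have "(\<Sum>t=1..T. cw \<beta> T t * Sb \<beta> (\<lambda>_. 1) t) = real T"
      using cw_Sb_identity[OF T_pos, of \<beta> "\<lambda>_. 1"] by simp
    also have "(\<Sum>t=1..T. cw \<beta> T t * Sb \<beta> f t) = (\<Sum>s=1..T. f s)"
      by (rule cw_Sb_identity[OF T_pos])
    finally show ?thesis .
  qed
  have fsum: "(\<Sum>s=1..T. f s) \<le> - (\<Sum>s=1..T. ee s) / DD"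
  proof -
    have "f s = - ee s / DD + (lam - mu / (2 * DD)) * dd s" for s
      unfolding f_def using DD_pos by (simp add: field_simps)
    then have "f s = - ee s / DD - 3 * lam * dd s" for s unfolding mu_over_DD by simp
    then have "(\<Sum>s=1..T. f s) = - (\<Sum>s=1..T. ee s) / DD - 3 * lam * (\<Sum>s=1..T. dd s)"
      by (simp add: sum_subtractf sum_distrib_left sum_divide_distrib sum_negf)
    moreover have "0 \<le> (\<Sum>s=1..T. dd s)" using dd_nonneg by (simp add: sum_nonneg)
    ultimately show ?thesis using lam_pos by simp
  qed
  have intF: "(\<integral>\<omega>. (\<Sum>t=1..T. F x0 - F (wv \<omega> t)) \<partial>conv_space R Xi T) = - (\<Sum>s=1..T. ee s)"
  proof -
    have i: "integrable (conv_space R Xi T) (\<lambda>\<omega>. F (wv \<omega> t) - F x0)" if "t \<in> {1..T}" for t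
      using Fw_integrable[OF that Delta_sq_integrable[OF that]] .
    have "(\<integral>\<omega>. (\<Sum>t=1..T. F x0 - F (wv \<omega> t)) \<partial>conv_space R Xi T) = (\<Sum>t=1..T. (\<integral>\<omega>. F x0 - F (wv \<omega> t) \<partial>conv_space R Xi T))"
    proof (intro Bochner_Integration.integral_sum)
      fix t assume t: "t \<in> {1..T}"
      have "integrable (conv_space R Xi T) (\<lambda>\<omega>. - (F (wv \<omega> t) - F x0))"
        using Bochner_Integration.integrable_minus[OF i[OF t]] .
      then show "integrable (conv_space R Xi T) (\<lambda>\<omega>. F x0 - F (wv \<omega> t))" by simp
    qed
    also have "\<dots> = (\<Sum>t=1..T. - ee t)"
    proof (intro sum.cong refl)
      fix t assume t: "t \<in> {1..T}"
      have "(\<integral>\<omega>. F x0 - F (wv \<omega> t) \<partial>conv_space R Xi T) = (\<integral>\<omega>. - (F (wv \<omega> t) - F x0) \<partial>conv_space R Xi T)" by simp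
      also have "\<dots> = - ee t" unfolding ee_def by (rule integral_minus)
      finally show "(\<integral>\<omega>. F x0 - F (wv \<omega> t) \<partial>conv_space R Xi T) = - ee t" .
    qed
    finally show ?thesis by (simp add: sum_negf)
  qed
  have "(\<Sum>t=1..T. cw \<beta> T t * Q t / real T) = (\<Sum>t=1..T. cw \<beta> T t * Q t) / real T"
    by (simp add: sum_divide_distrib)
  also have "\<dots> \<le> (K2 * (\<Sum>t=1..T. cw \<beta> T t) + (mu / 2 * DD) * real T - (\<Sum>s=1..T. ee s) / DD) / real T"
    unfolding sumQ using fsum Tp by (intro divide_right_mono) auto
  also have "\<dots> = K2 * (\<Sum>t=1..T. cw \<beta> T t) / real T + mu * DD / 2 + (1 / DD) / real T * (- (\<Sum>s=1..T. ee s))"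
    using Tp by (simp add: field_simps)
  also have "\<dots> \<le> 3 * \<epsilon> + (1 / DD) / real T * (- (\<Sum>s=1..T. ee s))"
    using numeric by linarith
  also have "\<dots> = 3 * \<epsilon> + 4 * sqrt lam / sqrt \<epsilon> / real T * (\<integral>\<omega>. (\<Sum>t=1..T. F x0 - F (wv \<omega> t)) \<partial>conv_space R Xi T)"
    unfolding intF inv_DD ..
  finally show ?thesis using step1 by linarith
qed

end

theorem corollary2:
  fixes F :: "'a::euclidean_space \<Rightarrow> real" and gradF :: "'a \<Rightarrow> 'a"
    and G \<sigma> lam \<epsilon> \<beta> \<mu> :: real and T :: nat and x0 :: 'a
    and Xi :: "'e measure" and Orc :: "'a \<Rightarrow> 'e \<Rightarrow> 'a"
    and R :: "'r measure" and A :: "'r \<Rightarrow> ('a \<Rightarrow> real) list \<Rightarrow> 'a"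
  assumes grad: "\<And>x. (F has_derivative (\<lambda>h. gradF x \<bullet> h)) (at x)"
    and ftc: "\<And>x w. ((\<lambda>t. gradF (w + t *\<^sub>R (x - w)) \<bullet> (x - w)) has_integral (F x - F w)) {0..1}"
    and grad_bound: "\<And>x. norm (gradF x) \<le> G"
    and sigma_nonneg: "\<sigma> \<ge> 0"
    and Xi_prob: "prob_space Xi"
    and O_meas: "(\<lambda>p. Orc (fst p) (snd p)) \<in> borel_measurable (borel \<Otimes>\<^sub>M Xi)"
    and O_unbiased: "\<And>x. integrable Xi (Orc x) \<and> (\<integral>\<xi>. Orc x \<xi> \<partial>Xi) = gradF x"
    and O_variance: "\<And>x. integrable Xi (\<lambda>\<xi>. (norm (Orc x \<xi> - gradF x))^2) \<and>
                         (\<integral>\<xi>. (norm (Orc x \<xi> - gradF x))^2 \<partial>Xi) \<le> \<sigma>^2"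
    and R_prob: "prob_space R"
    and lam_pos: "lam > 0"
    and eps_pos: "\<epsilon> > 0"
    and eps_le: "\<epsilon> \<le> 7/2 * (G + \<sigma>)"
    and T_ge: "real T \<ge> 49 * (G + \<sigma>)^2 / \<epsilon>^2"
    and beta_def: "\<beta> = 1 - (\<epsilon> / (7 * (G + \<sigma>)))^2"
    and mu_def: "\<mu> = 2 * sqrt lam * sqrt \<epsilon>"
    and Delta_meas: "\<And>t. t \<in> {1..T} \<Longrightarrow>
          (\<lambda>\<omega>. conv_Delta A Orc x0 \<mu> \<omega> t) \<in> borel_measurable (conv_space R Xi T)"
    and learner_regret: "\<And>t u. t \<in> {1..T} \<Longrightarrow>
          u \<in> borel_measurable (conv_space R Xi T) \<Longrightarrow>
          integrable (conv_space R Xi T) (\<lambda>\<omega>. (norm (u \<omega>))^2) \<Longrightarrow>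
          integrable (conv_space R Xi T)
             (\<lambda>\<omega>. regret_beta \<beta> (\<lambda>s. lin_quad_loss \<mu> (conv_g A Orc x0 \<mu> \<omega> s))
                     (conv_Delta A Orc x0 \<mu> \<omega>) t (u \<omega>)) \<and>
          (\<integral>\<omega>. regret_beta \<beta> (\<lambda>s. lin_quad_loss \<mu> (conv_g A Orc x0 \<mu> \<omega> s))
                     (conv_Delta A Orc x0 \<mu> \<omega>) t (u \<omega>) \<partial>conv_space R Xi T)
            \<le> (\<integral>\<omega>. 2 * norm (u \<omega>) * (G + \<sigma>) / (\<beta> * sqrt (1 - \<beta>)) + \<mu> / 2 * (norm (u \<omega>))^2
                  \<partial>conv_space R Xi T)"
  shows "(\<Sum>t=1..T. tau_prob \<beta> T t *
            (\<integral>\<omega>. lambda_norm gradF lam (exp_avg \<beta> (conv_y A Orc x0 \<mu> \<omega>) t) \<partial>conv_space R Xi T))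
         \<le> 3 * \<epsilon> + 4 * sqrt lam / sqrt \<epsilon> / real T *
            (\<integral>\<omega>. (\<Sum>t=1..T. F x0 - F (conv_w A Orc x0 \<mu> \<omega> t)) \<partial>conv_space R Xi T)"
  proof -
  interpret conv_main F gradF G \<sigma> Xi Orc R A x0 \<mu> T lam \<epsilon> \<beta>
    by (rule conv_main.intro[OF conv_run.intro[OF conv_setting.intro[OF grad ftc grad_bound sigma_nonneg Xi_prob O_meas O_unbiased O_variance]
          conv_run_axioms.intro[OF R_prob Delta_meas]]
        conv_main_axioms.intro[OF lam_pos eps_pos eps_le T_ge beta_def mu_def learner_regret]])
  show ?thesis by (rule main_bound)
qed

end
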